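(* Let $q\in(0,1)$, $\alpha\in(-1,1)$, $\beta<1$ real, and let $0<z_1<z_2<\cdots$ be the positive zeros of $\psi_{-1}^+$. If $z_1\ge1$, then $\mu_d=0$. Otherwise $\mu_d$ is supported on the finitely many points $\pm(z_k+z_k^{-1})$ with $z_k\in(0,1)$, and \[ \mu_d=\frac{1-\beta}{1-\alpha}\sum_{0<z_k<1}\frac{z_k^2-1}{z_k^2}\frac{\psi_0^+(z_k)}{(\psi_{-1}^+)'(z_k)}\left(\delta_{z_k+z_k^{-1}}+\delta_{-(z_k+z_k^{-1})}\right). \]
   Context: $(a;q)_n:=\prod_{j=0}^{n-1}(1-aq^j)$, $n\in\mathbb{N}_0\cup\{\infty\}$. The monic polynomials $p_n$ satisfy $p_{-1}=0$, $p_0=1$, $p_{n+1}(x)=xp_n(x)-\tilde\gamma_{n-1}\tilde\gamma_np_{n-1}(x)$, $\tilde\gamma_n=(1-\alpha q^n)/(1-\beta q^n)$; $\mu$ is the Borel probability measure with $\int p_mp_n\,{\rm d}\mu=\delta_{m,n}\prod_{j=0}^{n-1}\tilde\gamma_j\tilde\gamma_{j+1}$, and $\mu_d$ is its discrete (atomic) part. For $z\ne0$ and $n\ge-1$, $\psi_n^+(z):=z^n\sum_{k\ge0}\frac{(q^{k+1}z^2;q)_\infty}{(q;q)_k}c_k(z)q^{(n+1)k}$ with $c_k(z)=\prod_{j=0}^{k-1}(\alpha(1+z^2q^{2j})-\beta q^j(1+z^2))$; this is an analytic function of $z\ne0$, and $\delta_x$ denotes the unit point mass at $x$. *)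

theory Defs
  imports "HOL-Probability.Probability"
begin

definition qpoch :: "complex \<Rightarrow> real \<Rightarrow> nat \<Rightarrow> complex" where
  "qpoch a q n = (\<Prod>j<n. 1 - a * complex_of_real q ^ j)"

definition qpoch_inf :: "complex \<Rightarrow> real \<Rightarrow> complex" where
  "qpoch_inf a q = (\<Prod>j. 1 - a * complex_of_real q ^ j)"

definition gam :: "real \<Rightarrow> real \<Rightarrow> real \<Rightarrow> nat \<Rightarrow> real" where
  "gam q \<alpha> \<beta> n = (1 - \<alpha> * q ^ n) / (1 - \<beta> * q ^ n)"

text \<open>Monic polynomials: p_0 = 1, p_1 = x (since p_{-1} = 0),
  p_{n+1} = x p_n - gam_{n-1} gam_n p_{n-1}.\<close>
fun opoly :: "real \<Rightarrow> real \<Rightarrow> real \<Rightarrow> nat \<Rightarrow> real \<Rightarrow> real" where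
  "opoly q \<alpha> \<beta> 0 x = 1"
| "opoly q \<alpha> \<beta> (Suc 0) x = x"
| "opoly q \<alpha> \<beta> (Suc (Suc n)) x =
     x * opoly q \<alpha> \<beta> (Suc n) x - gam q \<alpha> \<beta> n * gam q \<alpha> \<beta> (Suc n) * opoly q \<alpha> \<beta> n x"

definition ck :: "real \<Rightarrow> real \<Rightarrow> real \<Rightarrow> nat \<Rightarrow> complex \<Rightarrow> complex" where
  "ck q \<alpha> \<beta> k z = (\<Prod>j<k. complex_of_real \<alpha> * (1 + z^2 * complex_of_real q ^ (2*j))
                          - complex_of_real \<beta> * complex_of_real q ^ j * (1 + z^2))"

text \<open>psi_n^+(z) for integer n \<ge> -1 and complex z \<noteq> 0.\<close>
definition psi_plus :: "real \<Rightarrow> real \<Rightarrow> real \<Rightarrow> int \<Rightarrow> complex \<Rightarrow> complex" where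
  "psi_plus q \<alpha> \<beta> n z = z powi n *
     (\<Sum>k. qpoch_inf (complex_of_real q ^ (k+1) * z^2) q / qpoch (complex_of_real q) q k
            * ck q \<alpha> \<beta> k z * complex_of_real q ^ (nat (n+1) * k))"

definition discrete_part :: "real measure \<Rightarrow> real set \<Rightarrow> real" where
  "discrete_part M A = (\<Sum>\<^sub>\<infinity>x\<in>A. measure M {x})"

end

theory Submission
  imports Defs "HOL-Complex_Analysis.Complex_Analysis" "HOL-Real_Asymp.Real_Asymp"
begin

locale qset =
  fixes q \<alpha> \<beta> :: real
  assumes q0: "0 < q" and q1: "q < 1" and a0: "-1 < \<alpha>" and a1: "\<alpha> < 1" and b1: "\<beta> < 1"
begin

lemma geom_partial_le: "(\<Sum>i<n. q ^ i) \<le> 1 / (1 - q)"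
proof -
  have "(\<Sum>i<n. q ^ i) = (1 - q ^ n) / (1 - q)"
    using q1 by (subst sum_gp_strict) auto
  also have "\<dots> \<le> 1 / (1 - q)"
    using q0 q1 by (intro divide_right_mono) auto
  finally show ?thesis .
qed

lemma qpi_conv: "convergent_prod (\<lambda>j. 1 - a * complex_of_real q ^ j)"
proof -
  have "summable (\<lambda>j. norm a * q ^ j)"
    using q0 q1 by (intro summable_mult summable_geometric) auto
  then have "summable (\<lambda>j. norm ((1 - a * complex_of_real q ^ j) - 1))"
    using q0 by (simp add: norm_mult norm_power)
  then show ?thesis
    by (intro abs_convergent_prod_imp_convergent_prod summable_imp_abs_convergent_prod)
qed

lemma qpi_LIMSEQ: "(\<lambda>n. \<Prod>j<n. 1 - a * complex_of_real q ^ j) \<longlonglongrightarrow> qpoch_inf a q"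
  unfolding qpoch_inf_def
  using convergent_prod_LIMSEQ[OF qpi_conv[of a]]
    LIMSEQ_lessThan_iff_atMost[where f="\<lambda>I. \<Prod>j\<in>I. 1 - a * complex_of_real q ^ j"]
  by simp

lemma qpi_partial_bound: "norm (\<Prod>j<n. 1 - a * complex_of_real q ^ j) \<le> exp (norm a / (1 - q))"
proof -
  have "norm (\<Prod>j<n. 1 - a * complex_of_real q ^ j) = (\<Prod>j<n. norm (1 - a * complex_of_real q ^ j))"
    by (simp add: prod_norm)
  also have "\<dots> \<le> (\<Prod>j<n. 1 + norm a * q ^ j)"
  proof (intro prod_mono conjI)
    fix j assume "j \<in> {..<n}"
    have "norm (1 - a * complex_of_real q ^ j) \<le> norm (1::complex) + norm (a * complex_of_real q ^ j)"
      by (rule norm_triangle_ineq4)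
    also have "\<dots> = 1 + norm a * q ^ j" using q0 by (simp add: norm_mult norm_power)
    finally show "norm (1 - a * complex_of_real q ^ j) \<le> 1 + norm a * q ^ j" .
  qed auto
  also have "\<dots> \<le> exp (\<Sum>j<n. norm a * q ^ j)"
    using q0 by (intro prod_le_exp_sum) auto
  also have "(\<Sum>j<n. norm a * q ^ j) \<le> norm a / (1 - q)"
    using geom_partial_le[of n] by (simp add: sum_distrib_left[symmetric] divide_inverse mult_left_mono)
  finally show ?thesis by simp
qed

lemma qpi_bound: "norm (qpoch_inf a q) \<le> exp (norm a / (1 - q))"
  by (rule LIMSEQ_le_const2[OF tendsto_norm[OF qpi_LIMSEQ[of a]]]) (use qpi_partial_bound in auto)

lemma qpi_nonzero:
  assumes "\<And>j. a * complex_of_real q ^ j \<noteq> 1"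
  shows "qpoch_inf a q \<noteq> 0"
  unfolding qpoch_inf_def using assms by (intro prodinf_nonzero qpi_conv) auto

lemma qpi_head: "qpoch_inf a q = (1 - a) * qpoch_inf (a * complex_of_real q) q"
proof -
  have h: "(\<lambda>n. 1 - a * complex_of_real q ^ Suc n) has_prod qpoch_inf (a * complex_of_real q) q"
    unfolding qpoch_inf_def using qpi_conv[of "a * complex_of_real q"]
    by (simp add: convergent_prod_has_prod mult.assoc mult.commute mult.left_commute)
  have "(\<lambda>n. 1 - a * complex_of_real q ^ n) has_prod (qpoch_inf (a * complex_of_real q) q * (1 - a * complex_of_real q ^ 0))"
    by (rule has_prod_Suc_imp[OF h])
  then show ?thesis unfolding qpoch_inf_def
    by (simp add: has_prod_iff mult.commute)
qed

lemma qpi_unif: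
  assumes "r > 0"
  shows "uniform_limit (cball 0 r) (\<lambda>N a. \<Prod>j<N. 1 - a * complex_of_real q ^ j) (\<lambda>a. qpoch_inf a q) sequentially"
proof -
  have "uniformly_convergent_on (cball 0 r) (\<lambda>N a. \<Prod>j<N. 1 - a * complex_of_real q ^ j)"
  proof (rule uniformly_convergent_on_prod')
    show "uniformly_convergent_on (cball 0 r) (\<lambda>N a. \<Sum>n<N. norm ((1 - a * complex_of_real q ^ n) - 1))"
    proof (rule Weierstrass_m_test')
      fix n and a :: complex assume "a \<in> cball 0 r"
      then show "norm (norm ((1 - a * complex_of_real q ^ n) - 1)) \<le> r * q ^ n"
        using q0 by (auto simp: norm_mult norm_power intro!: mult_right_mono)
    next
      show "summable (\<lambda>n. r * q ^ n)" using q0 q1 by (intro summable_mult summable_geometric) auto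
    qed
  qed (auto intro!: continuous_intros)
  then obtain l where l: "uniform_limit (cball 0 r) (\<lambda>N a. \<Prod>j<N. 1 - a * complex_of_real q ^ j) l sequentially"
    unfolding uniformly_convergent_on_def by blast
  have "l a = qpoch_inf a q" if "a \<in> cball 0 r" for a
    using tendsto_uniform_limitI[OF l that] qpi_LIMSEQ[of a] LIMSEQ_unique by blast
  with l show ?thesis
    by (metis (no_types, lifting) uniform_limit_cong' )
qed

lemma qpi_holo: "(\<lambda>a. qpoch_inf a q) holomorphic_on UNIV"
proof -
  have h: "(\<lambda>a. qpoch_inf a q) holomorphic_on ball 0 (real n + 1)" for n :: nat
  proof -
    have r: "real n + 1 > 0" by simp
    show ?thesis
      by (rule holomorphic_uniform_limit[OF _ qpi_unif[OF r]])
         (auto intro!: always_eventually holomorphic_intros continuous_intros)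
  qed
  have "UNIV = (\<Union>n\<in>UNIV. ball (0::complex) (real n + 1))"
  proof safe
    fix x :: complex
    obtain n :: nat where "norm x < real n" using reals_Archimedean2 by blast
    then have "norm x < real n + 1" by simp
    then show "x \<in> (\<Union>n\<in>UNIV. ball 0 (real n + 1))" by auto
  qed auto
  then show ?thesis using h holomorphic_on_UN_open[of UNIV "\<lambda>a. qpoch_inf a q" "\<lambda>n. ball 0 (real n + 1)"]
    by auto
qed

end

context qset begin

definition rho :: real where "rho = (1 + \<bar>\<alpha>\<bar>) / 2"

lemma rho_pos: "rho \<ge> 1/2" and rho_lt1: "rho < 1" and abs_a_le_rho: "\<bar>\<alpha>\<bar> \<le> rho"
  using a0 a1 by (auto simp: rho_def)

definition Lc :: "real \<Rightarrow> real" where "Lc R = \<bar>\<alpha>\<bar> * R^2 + \<bar>\<beta>\<bar> * (1 + R^2)"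

definition Cc :: "real \<Rightarrow> real" where "Cc R = exp (2 * Lc R / (1 - q))"

lemma ck_factor_bound:
  assumes "norm z \<le> R"
  shows "norm (complex_of_real \<alpha> * (1 + z^2 * complex_of_real q ^ (2*j))
                          - complex_of_real \<beta> * complex_of_real q ^ j * (1 + z^2)) \<le> rho + Lc R * q ^ j"
proof -
  have R: "R \<ge> 0" using assms norm_ge_zero order_trans by blast
  have qj: "q ^ (2*j) \<le> q ^ j" using q0 q1 by (intro power_decreasing) auto
  have z2: "norm (z^2) \<le> R^2" using assms by (simp add: norm_power power_mono)
  have "norm (complex_of_real \<alpha> * (1 + z^2 * complex_of_real q ^ (2*j))
                          - complex_of_real \<beta> * complex_of_real q ^ j * (1 + z^2))
     \<le> norm (complex_of_real \<alpha> * (1 + z^2 * complex_of_real q ^ (2*j)))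
        + norm (complex_of_real \<beta> * complex_of_real q ^ j * (1 + z^2))"
    by (rule norm_triangle_ineq4)
  also have "norm (complex_of_real \<alpha> * (1 + z^2 * complex_of_real q ^ (2*j)))
     \<le> \<bar>\<alpha>\<bar> * (1 + R^2 * q ^ j)"
  proof -
    have "norm (1 + z^2 * complex_of_real q ^ (2*j)) \<le> norm (1::complex) + norm (z^2 * complex_of_real q ^ (2*j))"
      by (rule norm_triangle_ineq)
    also have "\<dots> = 1 + norm (z^2) * q^(2*j)"
      using q0 by (simp add: norm_mult norm_power)
    finally have "norm (1 + z^2 * complex_of_real q ^ (2*j)) \<le> 1 + norm (z^2) * q^(2*j)" .
    also have "\<dots> \<le> 1 + R^2 * q ^ j"
      using z2 qj q0 by (intro add_left_mono mult_mono) auto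
    finally show ?thesis by (simp add: norm_mult mult_left_mono)
  qed
  also have "norm (complex_of_real \<beta> * complex_of_real q ^ j * (1 + z^2)) \<le> \<bar>\<beta>\<bar> * q ^ j * (1 + R^2)"
  proof -
    have "norm (1 + z^2) \<le> norm (1::complex) + norm (z^2)"
      by (rule norm_triangle_ineq)
    then have "norm (1 + z^2) \<le> 1 + R^2"
      using z2 by simp
    then show ?thesis using q0 by (simp add: norm_mult norm_power mult_left_mono)
  qed
  finally have "norm (complex_of_real \<alpha> * (1 + z^2 * complex_of_real q ^ (2*j))
                          - complex_of_real \<beta> * complex_of_real q ^ j * (1 + z^2))
      \<le> \<bar>\<alpha>\<bar> + (\<bar>\<alpha>\<bar> * R^2 + \<bar>\<beta>\<bar> * (1 + R^2)) * q ^ j"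
    by (simp add: algebra_simps)
  then show ?thesis using abs_a_le_rho unfolding Lc_def by linarith
qed

lemma Lc_nonneg: "Lc R \<ge> 0"
  unfolding Lc_def by (intro add_nonneg_nonneg mult_nonneg_nonneg) auto

lemma ck_bound:
  assumes "norm z \<le> R"
  shows "norm (ck q \<alpha> \<beta> k z) \<le> Cc R * rho ^ k"
proof -
  have "norm (ck q \<alpha> \<beta> k z) = (\<Prod>j<k. norm (complex_of_real \<alpha> * (1 + z^2 * complex_of_real q ^ (2*j))
                          - complex_of_real \<beta> * complex_of_real q ^ j * (1 + z^2)))"
    unfolding ck_def by (simp add: prod_norm)
  also have "\<dots> \<le> (\<Prod>j<k. rho * (1 + (Lc R / rho) * q ^ j))"
  proof (intro prod_mono conjI)
    fix j
    have "rho * (1 + (Lc R / rho) * q ^ j) = rho + Lc R * q ^ j" using rho_pos by (simp add: field_simps)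
    then show "norm (complex_of_real \<alpha> * (1 + z^2 * complex_of_real q ^ (2*j))
                          - complex_of_real \<beta> * complex_of_real q ^ j * (1 + z^2)) \<le> rho * (1 + (Lc R / rho) * q ^ j)"
      using ck_factor_bound[OF assms, of j] by simp
  qed auto
  also have "\<dots> = rho ^ k * (\<Prod>j<k. 1 + (Lc R / rho) * q ^ j)"
    by (simp add: prod.distrib)
  also have "(\<Prod>j<k. 1 + (Lc R / rho) * q ^ j) \<le> exp (\<Sum>j<k. (Lc R / rho) * q ^ j)"
    using Lc_nonneg rho_pos q0 by (intro prod_le_exp_sum) auto
  also have "(\<Sum>j<k. (Lc R / rho) * q ^ j) \<le> 2 * Lc R / (1 - q)"
  proof -
    have "(\<Sum>j<k. (Lc R / rho) * q ^ j) = (Lc R / rho) * (\<Sum>j<k. q ^ j)" by (simp add: sum_distrib_left)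
    also have "\<dots> \<le> (Lc R / rho) * (1 / (1 - q))"
      using geom_partial_le Lc_nonneg rho_pos by (intro mult_left_mono) auto
    also have "\<dots> \<le> (2 * Lc R) * (1 / (1 - q))"
    proof (rule mult_right_mono)
      have "Lc R * 1 \<le> Lc R * (2*rho)" using Lc_nonneg rho_pos by (intro mult_left_mono) auto
      then show "Lc R / rho \<le> 2 * Lc R" using rho_pos by (simp add: field_simps)
    qed (use q1 in auto)
    finally show ?thesis by simp
  qed
  finally show ?thesis
    unfolding Cc_def using rho_pos by (simp add: mult.commute mult_left_mono)
qed

lemma one_minus_ge_exp: assumes "0 \<le> x" "x \<le> q" shows "exp (- x / (1 - q)) \<le> 1 - x"
proof -
  have x1: "x < 1" using assms q1 by simp
  have "x / (1 - x) \<le> x / (1 - q)"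
    using assms x1 q1 by (intro divide_left_mono) auto
  then have "exp (- x / (1 - q)) \<le> exp (- x / (1 - x))"
    by simp
  also have "exp (- x / (1 - x)) = inverse (exp (x / (1 - x)))" by (simp add: exp_minus)
  also have "\<dots> \<le> inverse (1 + x / (1 - x))"
    using x1 assms by (intro le_imp_inverse_le exp_ge_add_one_self) (auto simp: field_simps)
  also have "inverse (1 + x / (1 - x)) = 1 - x" using x1 by (simp add: field_simps)
  finally show ?thesis .
qed

definition qq :: "nat \<Rightarrow> real" where "qq k = (\<Prod>j<k. 1 - q ^ Suc j)"

lemma qpoch_qq: "qpoch (complex_of_real q) q k = complex_of_real (qq k)"
  unfolding qpoch_def qq_def by (simp add: power_Suc mult.commute)

lemma qq_lower: "qq k \<ge> exp (- (1 / (1 - q)^2))"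
proof -
  have "exp (\<Sum>j<k. (-(q ^ Suc j) / (1 - q))) = (\<Prod>j<k. exp (-(q ^ Suc j) / (1 - q)))"
    by (simp add: exp_sum)
  also have "\<dots> \<le> qq k" unfolding qq_def
  proof (intro prod_mono conjI)
    fix j assume "j \<in> {..<k}"
    have "q ^ j \<le> 1" using q0 q1 by (intro power_le_one) auto
    then have "q * q ^ j \<le> q" using q0 by (intro mult_left_le) auto
    then have "q ^ Suc j \<le> q" by simp
    then show "exp (-(q ^ Suc j) / (1 - q)) \<le> 1 - q ^ Suc j" using q0 by (intro one_minus_ge_exp) auto
  qed auto
  finally have 1: "exp (\<Sum>j<k. (-(q ^ Suc j) / (1 - q))) \<le> qq k" .
  have "(\<Sum>j<k. q ^ Suc j / (1 - q)) = (\<Sum>j<k. q / (1 - q) * q ^ j)"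
    by (intro sum.cong refl) simp
  also have "\<dots> = q / (1 - q) * (\<Sum>j<k. q ^ j)"
    by (simp add: sum_distrib_left)
  also have "\<dots> \<le> q / (1 - q) * (1 / (1 - q))"
    using q0 q1 geom_partial_le by (intro mult_left_mono) auto
  also have "\<dots> = q / (1 - q)^2" by (simp add: power2_eq_square)
  also have "\<dots> \<le> 1 / (1 - q)^2" using q0 q1 by (intro divide_right_mono) auto
  finally have "- (1 / (1 - q)^2) \<le> - (\<Sum>j<k. q ^ Suc j / (1 - q))"
    by linarith
  also have "- (\<Sum>j<k. q ^ Suc j / (1 - q)) = (\<Sum>j<k. (-(q ^ Suc j) / (1 - q)))"
    by (simp add: sum_negf[symmetric])
  finally have "- (1 / (1 - q)^2) \<le> (\<Sum>j<k. (-(q ^ Suc j) / (1 - q)))" .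
  then show ?thesis using 1 by (meson exp_le_cancel_iff order_trans)
qed

lemma qq_pos: "qq k > 0"
  using qq_lower[of k] by (meson exp_gt_zero less_le_trans)

definition Ak :: "nat \<Rightarrow> complex \<Rightarrow> complex" where
  "Ak k z = qpoch_inf (complex_of_real q ^ (k+1) * z^2) q / qpoch (complex_of_real q) q k * ck q \<alpha> \<beta> k z"

definition CA :: "real \<Rightarrow> real" where "CA R = exp (R^2 / (1 - q)) * exp (1 / (1 - q)^2) * Cc R"

lemma CA_pos: "CA R > 0" unfolding CA_def Cc_def by simp

lemma CArho_nonneg: "0 \<le> CA R * rho ^ k"
  using CA_pos[of R] rho_pos by (intro mult_nonneg_nonneg) auto

lemma Ak_bound:
  assumes "norm z \<le> R"
  shows "norm (Ak k z) \<le> CA R * rho ^ k"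
proof -
  have R: "R \<ge> 0" using assms norm_ge_zero order_trans by blast
  have n1: "norm (complex_of_real q ^ (k+1) * z^2) \<le> R^2"
  proof -
    have "norm (complex_of_real q ^ (k+1) * z^2) = q^(k+1) * norm z ^ 2"
      using q0 by (simp add: norm_mult norm_power)
    also have "\<dots> \<le> 1 * R^2"
      using q0 q1 assms by (intro mult_mono power_le_one power_mono) auto
    finally show ?thesis by simp
  qed
  have a: "norm (qpoch_inf (complex_of_real q ^ (k+1) * z^2) q) \<le> exp (R^2 / (1 - q))"
    using qpi_bound[of "complex_of_real q ^ (k+1) * z^2"] n1 q1
    by (meson divide_right_mono exp_le_cancel_iff order_trans diff_gt_0_iff_gt less_imp_le)
  have b: "norm (1 / qpoch (complex_of_real q) q k) \<le> exp (1 / (1 - q)^2)"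
  proof -
    have "norm (1 / qpoch (complex_of_real q) q k) = 1 / qq k"
      using qq_pos[of k] by (simp add: qpoch_qq norm_divide)
    also have "\<dots> \<le> 1 / exp (- (1 / (1 - q)^2))"
      using qq_lower[of k] qq_pos[of k] by (intro divide_left_mono) auto
    also have "\<dots> = exp (1 / (1 - q)^2)" by (simp add: exp_minus field_simps)
    finally show ?thesis .
  qed
  have "norm (Ak k z) = norm (qpoch_inf (complex_of_real q ^ (k+1) * z^2) q)
      * norm (1 / qpoch (complex_of_real q) q k) * norm (ck q \<alpha> \<beta> k z)"
    unfolding Ak_def by (simp add: norm_mult norm_divide)
  also have "\<dots> \<le> exp (R^2 / (1 - q)) * exp (1 / (1 - q)^2) * (Cc R * rho ^ k)"
    using a b ck_bound[OF assms, of k] by (intro mult_mono) auto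
  finally show ?thesis unfolding CA_def by (simp add: mult.assoc)
qed

lemma Ak_holo: "Ak k holomorphic_on UNIV"
proof -
  have "(\<lambda>z. qpoch_inf (complex_of_real q ^ (k+1) * z^2) q) holomorphic_on UNIV"
  proof -
    have 1: "(\<lambda>z. complex_of_real q ^ (k+1) * z^2) holomorphic_on UNIV"
      by (intro holomorphic_intros)
    have 2: "(\<lambda>a. qpoch_inf a q) holomorphic_on ((\<lambda>z. complex_of_real q ^ (k+1) * z^2) ` UNIV)"
      using qpi_holo by (rule holomorphic_on_subset) auto
    show ?thesis using holomorphic_on_compose[OF 1 2] by (simp add: o_def)
  qed
  then show ?thesis
    unfolding Ak_def ck_def using qq_pos by (intro holomorphic_intros) (auto simp: qpoch_qq)
qed

lemma Ak0: "Ak 0 z = qpoch_inf (complex_of_real q * z^2) q"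
  unfolding Ak_def qpoch_def ck_def by simp

definition Phi :: "nat \<Rightarrow> complex \<Rightarrow> complex" where
  "Phi m z = (\<Sum>k. Ak k z * complex_of_real q ^ (m*k))"

lemma Phi_term_bound:
  assumes "norm z \<le> R"
  shows "norm (Ak k z * complex_of_real q ^ (m*k)) \<le> CA R * rho ^ k"
proof -
  have "norm (Ak k z * complex_of_real q ^ (m*k)) = norm (Ak k z) * q ^ (m*k)"
    using q0 by (simp add: norm_mult norm_power)
  also have "\<dots> \<le> CA R * rho ^ k * 1"
    using Ak_bound[OF assms] q0 q1 CA_pos[of R] rho_pos by (intro mult_mono power_le_one) auto
  finally show ?thesis by simp
qed

lemma summable_rho: "summable (\<lambda>k. c * rho ^ k)"
  using rho_pos rho_lt1 by (intro summable_mult summable_geometric) auto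

lemma Phi_summable: "summable (\<lambda>k. Ak k z * complex_of_real q ^ (m*k))"
  by (rule summable_comparison_test'[OF summable_rho[of "CA (norm z)"] Phi_term_bound]) auto

lemma Phi_norm_summable: "summable (\<lambda>k. norm (Ak k z * complex_of_real q ^ (m*k)))"
  by (rule summable_comparison_test'[OF summable_rho[of "CA (norm z)"]]) (use Phi_term_bound in auto)

lemma suminf_rho: "(\<Sum>k. c * rho ^ k) = c / (1 - rho)"
  using rho_pos rho_lt1 by (simp add: suminf_mult suminf_geometric)

lemma Phi_bound:
  assumes "norm z \<le> R"
  shows "norm (Phi m z) \<le> CA R / (1 - rho)"
proof -
  have "norm (Phi m z) \<le> (\<Sum>k. norm (Ak k z * complex_of_real q ^ (m*k)))"
    unfolding Phi_def by (rule summable_norm[OF Phi_norm_summable])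
  also have "\<dots> \<le> (\<Sum>k. CA R * rho ^ k)"
    by (intro suminf_le Phi_norm_summable summable_rho Phi_term_bound assms)
  finally show ?thesis by (simp add: suminf_rho)
qed

lemma Phi_minus_A0:
  assumes "norm z \<le> R"
  shows "norm (Phi m z - Ak 0 z) \<le> q ^ m * (CA R / (1 - rho))"
proof -
  let ?f = "\<lambda>k. Ak k z * complex_of_real q ^ (m*k)"
  have sf: "summable ?f" by (rule Phi_summable)
  have snf: "summable (\<lambda>k. norm (?f (Suc k)))"
    using Phi_norm_summable[of z m] by (subst summable_Suc_iff)
  have "Phi m z - Ak 0 z = (\<Sum>k. ?f (Suc k))"
    unfolding Phi_def using suminf_split_head[OF sf] by simp
  also have "norm \<dots> \<le> (\<Sum>k. norm (?f (Suc k)))"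
    by (rule summable_norm[OF snf])
  also have "\<dots> \<le> (\<Sum>k. q ^ m * (CA R * rho ^ k))"
  proof (rule suminf_le[OF _ snf])
    fix k
    have e: "norm (?f (Suc k)) = norm (Ak (Suc k) z) * (q ^ m * q ^ (m*k))"
      using q0 by (simp add: norm_mult norm_power power_add)
    have qmk: "q ^ (m*k) \<le> 1" using q0 q1 by (intro power_le_one) auto
    have "rho * rho ^ k \<le> rho ^ k" using rho_pos rho_lt1 by (intro mult_left_le_one_le) auto
    then have r: "rho ^ Suc k \<le> rho ^ k" by simp
    have "norm (Ak (Suc k) z) \<le> CA R * rho ^ k"
      using Ak_bound[OF assms, of "Suc k"] r CA_pos[of R] by (meson mult_left_mono less_imp_le order_trans)
    moreover have "q ^ m * q ^ (m*k) \<le> q ^ m"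
      using qmk q0 by (intro mult_left_le) auto
    ultimately have "norm (Ak (Suc k) z) * (q ^ m * q ^ (m*k)) \<le> (CA R * rho ^ k) * q ^ m"
      using q0 CArho_nonneg[of R k] by (intro mult_mono) auto
    then show "norm (?f (Suc k)) \<le> q ^ m * (CA R * rho ^ k)"
      using e by (simp only: mult.commute)
  next
    show "summable (\<lambda>k. q ^ m * (CA R * rho ^ k))"
      by (intro summable_mult summable_rho)
  qed
  also have "\<dots> = q ^ m * (\<Sum>k. CA R * rho ^ k)"
    by (rule suminf_mult[OF summable_rho])
  also have "\<dots> = q ^ m * (CA R / (1 - rho))"
    by (simp only: suminf_rho)
  finally show ?thesis .
qed

lemma Phi_unif:
  "uniform_limit (cball 0 R) (\<lambda>n z. \<Sum>k<n. Ak k z * complex_of_real q ^ (m*k)) (Phi m) sequentially"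
  unfolding Phi_def[abs_def]
  by (rule Weierstrass_m_test[OF _ summable_rho[of "CA R"]]) (auto intro: Phi_term_bound)

lemma Phi_holo: "Phi m holomorphic_on ball 0 R" and Phi_cont: "continuous_on (cball 0 R) (Phi m)"
proof -
  have "\<And>n. (\<lambda>z. \<Sum>k<n. Ak k z * complex_of_real q ^ (m*k)) holomorphic_on UNIV"
    using Ak_holo by (intro holomorphic_intros) auto
  then have ev: "\<forall>\<^sub>F n in sequentially. continuous_on (cball 0 R) (\<lambda>z. \<Sum>k<n. Ak k z * complex_of_real q ^ (m*k))
                 \<and> (\<lambda>z. \<Sum>k<n. Ak k z * complex_of_real q ^ (m*k)) holomorphic_on ball 0 R"
    by (intro always_eventually allI conjI holomorphic_on_imp_continuous_on)
       (auto intro: holomorphic_on_subset)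
  show "Phi m holomorphic_on ball 0 R" "continuous_on (cball 0 R) (Phi m)"
    using holomorphic_uniform_limit[OF ev Phi_unif] by auto
qed

lemma Phi_holo_UNIV: "Phi m holomorphic_on UNIV"
proof -
  have "UNIV = (\<Union>n\<in>UNIV. ball (0::complex) (real n + 1))"
  proof safe
    fix x :: complex
    obtain n :: nat where "norm x < real n" using reals_Archimedean2 by blast
    then have "norm x < real n + 1" by simp
    then show "x \<in> (\<Union>n\<in>UNIV. ball 0 (real n + 1))" by auto
  qed auto
  then show ?thesis using Phi_holo holomorphic_on_UN_open[of UNIV "Phi m" "\<lambda>n. ball 0 (real n + 1)"]
    by auto
qed

lemma psi_Phi: "psi_plus q \<alpha> \<beta> (int m - 1) z = z powi (int m - 1) * Phi m z"
  unfolding psi_plus_def Phi_def Ak_def by simp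

end

lemma green_sum:
  fixes a b c :: "nat \<Rightarrow> 'a::field"
  assumes c: "\<And>m. c m \<noteq> 0"
    and ra: "\<And>m. c m * (a (Suc (Suc m)) + a m) = x * a (Suc m)"
    and rb: "\<And>m. c m * (b (Suc (Suc m)) + b m) = y * b (Suc m)"
  shows "(x - y) * (\<Sum>m<N. a (Suc m) * b (Suc m) / c m)
           = (a (Suc N) * b N - a N * b (Suc N)) - (a 1 * b 0 - a 0 * b 1)"
proof (induction N)
  case 0
  then show ?case by simp
next
  case (Suc N)
  have ea: "a (Suc (Suc N)) + a N = x * a (Suc N) / c N" using ra[of N] c[of N] by (simp add: field_simps)
  have eb: "b (Suc (Suc N)) + b N = y * b (Suc N) / c N" using rb[of N] c[of N] by (simp add: field_simps)
  have "(x - y) * (\<Sum>m<Suc N. a (Suc m) * b (Suc m) / c m)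
      = (x - y) * (\<Sum>m<N. a (Suc m) * b (Suc m) / c m) + (x - y) * (a (Suc N) * b (Suc N) / c N)"
    by (simp add: algebra_simps)
  also have "(x - y) * (a (Suc N) * b (Suc N) / c N)
      = b (Suc N) * (a (Suc (Suc N)) + a N) - a (Suc N) * (b (Suc (Suc N)) + b N)"
    unfolding ea eb using c[of N] by (simp add: field_simps)
  also have "b (Suc N) * (a (Suc (Suc N)) + a N) - a (Suc N) * (b (Suc (Suc N)) + b N)
     = (a (Suc (Suc N)) * b (Suc N) - a (Suc N) * b (Suc (Suc N))) - (a (Suc N) * b N - a N * b (Suc N))"
    by (simp add: algebra_simps)
  finally show ?case unfolding Suc.IH by simp
qed

lemma wronskian_const:
  fixes a b c :: "nat \<Rightarrow> 'a::field"
  assumes c: "\<And>m. c m \<noteq> 0"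
    and ra: "\<And>m. c m * (a (Suc (Suc m)) + a m) = x * a (Suc m)"
    and rb: "\<And>m. c m * (b (Suc (Suc m)) + b m) = x * b (Suc m)"
  shows "a (Suc N) * b N - a N * b (Suc N) = a 1 * b 0 - a 0 * b 1"
  using green_sum[of c a x b x N, OF c ra rb] by simp

lemma rec_unique:
  fixes a b c :: "nat \<Rightarrow> 'a::field"
  assumes c: "\<And>m. c m \<noteq> 0"
    and ra: "\<And>m. c m * (a (Suc (Suc m)) + a m) = x * a (Suc m)"
    and rb: "\<And>m. c m * (b (Suc (Suc m)) + b m) = x * b (Suc m)"
    and "a 0 = b 0" "a 1 = b 1"
  shows "a n = b n"
proof -
  have "a n = b n \<and> a (Suc n) = b (Suc n)" for n
  proof (induction n)
    case 0 then show ?case using assms by simp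
  next
    case (Suc n)
    have "a (Suc (Suc n)) = x * a (Suc n) / c n - a n" using ra[of n] c[of n] by (simp add: field_simps)
    moreover have "b (Suc (Suc n)) = x * b (Suc n) / c n - b n" using rb[of n] c[of n] by (simp add: field_simps)
    ultimately show ?case using Suc by simp
  qed
  then show ?thesis by simp
qed

context qset begin

abbreviation g :: "nat \<Rightarrow> real" where "g \<equiv> gam q \<alpha> \<beta>"

lemma den_pos: "1 - \<beta> * q ^ m > 0"
proof -
  have "q ^ m \<le> 1" using q0 q1 by (intro power_le_one) auto
  moreover have "q ^ m \<ge> 0" using q0 by simp
  ultimately have "\<beta> * q ^ m < 1"
  proof (cases "\<beta> \<ge> 0")
    case True
    then have "\<beta> * q ^ m \<le> \<beta>" using \<open>q ^ m \<le> 1\<close> by (intro mult_left_le) auto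
    then show ?thesis using b1 by simp
  next
    case False
    then have "\<beta> * q ^ m \<le> 0" using \<open>q ^ m \<ge> 0\<close> by (intro mult_nonpos_nonneg) auto
    then show ?thesis by simp
  qed
  then show ?thesis by simp
qed

lemma num_pos: "1 - \<alpha> * q ^ m > 0"
proof -
  have "q ^ m \<le> 1" using q0 q1 by (intro power_le_one) auto
  moreover have "q ^ m \<ge> 0" using q0 by simp
  ultimately have "\<bar>\<alpha> * q ^ m\<bar> \<le> \<bar>\<alpha>\<bar>" by (simp add: abs_mult mult_left_le)
  then show ?thesis using a0 a1 by linarith
qed

lemma g_pos: "g m > 0"
  unfolding gam_def using num_pos den_pos by simp

definition glo :: real where "glo = (1 - \<bar>\<alpha>\<bar>) / (1 + \<bar>\<beta>\<bar>)"
definition ghi :: real where "ghi = (1 + \<bar>\<alpha>\<bar>) / min 1 (1 - \<beta>)"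

lemma glo_pos: "glo > 0" unfolding glo_def using a0 a1 by auto
lemma ghi_pos: "ghi > 0" unfolding ghi_def using a1 a0 b1 by auto

lemma g_bounds: "glo \<le> g m" "g m \<le> ghi"
proof -
  have qm: "q ^ m \<le> 1" "q ^ m \<ge> 0" using q0 q1 by (auto intro: power_le_one)
  have n1: "1 - \<alpha> * q ^ m \<ge> 1 - \<bar>\<alpha>\<bar>" and n2: "1 - \<alpha> * q ^ m \<le> 1 + \<bar>\<alpha>\<bar>"
  proof -
    have "\<bar>\<alpha> * q ^ m\<bar> \<le> \<bar>\<alpha>\<bar>" using qm by (simp add: abs_mult mult_left_le)
    then show "1 - \<alpha> * q ^ m \<ge> 1 - \<bar>\<alpha>\<bar>" "1 - \<alpha> * q ^ m \<le> 1 + \<bar>\<alpha>\<bar>" by linarith+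
  qed
  have d1: "1 - \<beta> * q ^ m \<le> 1 + \<bar>\<beta>\<bar>"
  proof -
    have "\<bar>\<beta> * q ^ m\<bar> \<le> \<bar>\<beta>\<bar>" using qm by (simp add: abs_mult mult_left_le)
    then show ?thesis by linarith
  qed
  have d2: "1 - \<beta> * q ^ m \<ge> min 1 (1 - \<beta>)"
  proof (cases "\<beta> \<ge> 0")
    case True then have "\<beta> * q ^ m \<le> \<beta>" using qm by (simp add: mult_left_le)
    then show ?thesis by simp
  next
    case False then have "\<beta> * q ^ m \<le> 0" using qm by (simp add: mult_nonpos_nonneg)
    then show ?thesis by simp
  qed
  have dp: "1 - \<beta> * q ^ m > 0" by (rule den_pos)
  have np: "1 - \<alpha> * q ^ m > 0" by (rule num_pos)
  show "glo \<le> g m" unfolding glo_def gam_def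
    using n1 d1 dp a0 a1 by (intro frac_le) auto
  show "g m \<le> ghi" unfolding ghi_def gam_def
    using n2 d2 dp np b1 by (intro frac_le) auto
qed

definition fk :: "nat \<Rightarrow> complex \<Rightarrow> complex" where
  "fk k z = complex_of_real \<alpha> * (1 + z^2 * complex_of_real q ^ (2*k))
             - complex_of_real \<beta> * complex_of_real q ^ k * (1 + z^2)"

lemma Ak_step: "Ak (Suc k) z * (1 - complex_of_real q ^ Suc k) * (1 - z^2 * complex_of_real q ^ Suc k)
   = Ak k z * fk k z"
proof -
  have ck: "ck q \<alpha> \<beta> (Suc k) z = ck q \<alpha> \<beta> k z * fk k z" unfolding ck_def fk_def by simp
  have qp: "qpoch (complex_of_real q) q (Suc k) = qpoch (complex_of_real q) q k * (1 - complex_of_real q ^ Suc k)"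
    unfolding qpoch_def by (simp add: mult.commute)
  have qi: "qpoch_inf (complex_of_real q ^ (k+1) * z^2) q
      = (1 - complex_of_real q ^ Suc k * z^2) * qpoch_inf (complex_of_real q ^ (Suc k + 1) * z^2) q"
    using qpi_head[of "complex_of_real q ^ (k+1) * z^2"] by (simp add: mult_ac)
  have nz1: "qpoch (complex_of_real q) q k \<noteq> 0" using qq_pos[of k] by (simp add: qpoch_qq)
  have "complex_of_real q ^ Suc k \<noteq> 1"
  proof
    assume "complex_of_real q ^ Suc k = 1"
    then have "q ^ Suc k = 1" by (metis of_real_eq_1_iff of_real_power)
    moreover have "q ^ Suc k < 1" using q0 q1 by (rule power_Suc_less_one)
    ultimately show False by simp
  qed
  then have nz2: "1 - complex_of_real q ^ Suc k \<noteq> 0" by simp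
  show ?thesis unfolding Ak_def ck qp qi using nz1 nz2
    by (simp add: field_simps)
qed

lemma Phi_sums: "(\<lambda>k. Ak k z * complex_of_real q ^ (m*k)) sums Phi m z"
  unfolding Phi_def by (rule summable_sums[OF Phi_summable])

lemma Phi_rec:
  "(1 - complex_of_real (\<alpha> * q ^ m)) * (z^2 * Phi (m+2) z + Phi m z)
     = (1 - complex_of_real (\<beta> * q ^ m)) * (z^2 + 1) * Phi (m+1) z"
proof -
  define Q where "Q = complex_of_real q"
  define P where "P j k = Ak k z * Q ^ (j*k)" for j k
  have Ps: "P j sums Phi j z" for j unfolding P_def Q_def by (rule Phi_sums)
  define T1 where "T1 k = Ak k z * Q ^ (m*k) * (1 - Q ^ k) * (1 - z^2 * Q ^ k)" for k
  define T2 where "T2 k = Ak k z * Q ^ (m*k) * Q ^ m * fk k z" for k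
  have T1eq: "T1 k = P m k - P (m+1) k - z^2 * P (m+1) k + z^2 * P (m+2) k" for k
    unfolding T1_def P_def by (simp add: algebra_simps power_add power_mult_distrib power_mult mult_2)
  have T1s: "T1 sums (Phi m z - Phi (m+1) z - z^2 * Phi (m+1) z + z^2 * Phi (m+2) z)"
    unfolding T1eq by (intro sums_add sums_diff sums_mult Ps)
  have T12: "T1 (Suc k) = T2 k" for k
  proof -
    have "T1 (Suc k) = (Ak (Suc k) z * (1 - Q ^ Suc k) * (1 - z^2 * Q ^ Suc k)) * Q ^ (m * Suc k)"
      unfolding T1_def by (simp add: mult_ac)
    also have "\<dots> = Ak k z * fk k z * Q ^ (m * Suc k)" unfolding Q_def Ak_step ..
    finally show ?thesis unfolding T2_def by (simp add: mult_ac power_add)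
  qed
  have T2s: "T2 sums (Phi m z - Phi (m+1) z - z^2 * Phi (m+1) z + z^2 * Phi (m+2) z)"
  proof -
    have "(\<lambda>k. T1 (Suc k)) sums (Phi m z - Phi (m+1) z - z^2 * Phi (m+1) z + z^2 * Phi (m+2) z - T1 0)"
      using T1s sums_Suc_iff[of T1] by simp
    moreover have "T1 0 = 0" unfolding T1_def by simp
    ultimately show ?thesis using T12 by simp
  qed
  have T2eq: "T2 k = Q ^ m * (complex_of_real \<alpha> * P m k + complex_of_real \<alpha> * z^2 * P (m+2) k
        - complex_of_real \<beta> * P (m+1) k - complex_of_real \<beta> * z^2 * P (m+1) k)" for k
    unfolding T2_def P_def fk_def Q_def by (simp add: algebra_simps power_add power_mult_distrib power_mult mult_2 power2_eq_square)
  have T2s': "T2 sums (Q ^ m * (complex_of_real \<alpha> * Phi m z + complex_of_real \<alpha> * z^2 * Phi (m+2) z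
        - complex_of_real \<beta> * Phi (m+1) z - complex_of_real \<beta> * z^2 * Phi (m+1) z))"
    unfolding T2eq by (intro sums_add sums_diff sums_mult Ps)
  have "Phi m z - Phi (m+1) z - z^2 * Phi (m+1) z + z^2 * Phi (m+2) z
     = Q ^ m * (complex_of_real \<alpha> * Phi m z + complex_of_real \<alpha> * z^2 * Phi (m+2) z
        - complex_of_real \<beta> * Phi (m+1) z - complex_of_real \<beta> * z^2 * Phi (m+1) z)"
    using sums_unique2[OF T2s T2s'] .
  then show ?thesis unfolding Q_def by (simp add: algebra_simps)
qed

definition ps :: "nat \<Rightarrow> complex \<Rightarrow> complex" where
  "ps m z = z powi (int m - 1) * Phi m z"

lemma ps_psi: "ps m z = psi_plus q \<alpha> \<beta> (int m - 1) z"
  unfolding ps_def psi_Phi ..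

lemma ps_eq: "z \<noteq> 0 \<Longrightarrow> ps m z = z ^ m / z * Phi m z"
  unfolding ps_def by (simp add: power_int_diff)

lemma ps_rec:
  assumes "z \<noteq> 0"
  shows "complex_of_real (g m) * (ps (Suc (Suc m)) z + ps m z) = (z + 1 / z) * ps (Suc m) z"
proof -
  have d: "1 - complex_of_real (\<beta> * q ^ m) \<noteq> 0"
    using den_pos[of m] by (metis diff_gt_0_iff_gt less_irrefl of_real_1 of_real_eq_iff eq_iff_diff_eq_0)
  have gm: "complex_of_real (g m) = (1 - complex_of_real (\<alpha> * q ^ m)) / (1 - complex_of_real (\<beta> * q ^ m))"
    unfolding gam_def by simp
  have key: "complex_of_real (g m) * (z^2 * Phi (m+2) z + Phi m z) = (z^2 + 1) * Phi (m+1) z"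
    using Phi_rec[of m z] d unfolding gm by (simp add: field_simps)
  have "complex_of_real (g m) * (ps (Suc (Suc m)) z + ps m z)
      = z ^ m / z * (complex_of_real (g m) * (z^2 * Phi (m+2) z + Phi m z))"
    using assms unfolding ps_eq[OF assms] by (simp add: field_simps power2_eq_square)
  also have "\<dots> = z ^ m / z * ((z^2 + 1) * Phi (m+1) z)" by (simp only: key)
  also have "\<dots> = (z + 1 / z) * ps (Suc m) z"
    using assms unfolding ps_eq[OF assms] by (simp add: field_simps power2_eq_square)
  finally show ?thesis .
qed

fun V :: "nat \<Rightarrow> real \<Rightarrow> real" where
  "V 0 x = 0"
| "V (Suc 0) x = 1"
| "V (Suc (Suc m)) x = x * V (Suc m) x / g m - V m x"

lemma V_rec: "g m * (V (Suc (Suc m)) x + V m x) = x * V (Suc m) x"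
  using g_pos[of m] by (simp add: field_simps)

lemma V_rec_c: "complex_of_real (g m) * (complex_of_real (V (Suc (Suc m)) x) + complex_of_real (V m x))
   = complex_of_real x * complex_of_real (V (Suc m) x)"
  using V_rec[of m x] by (metis of_real_add of_real_mult)

lemma V_opoly: "opoly q \<alpha> \<beta> n x = V (Suc n) x * (\<Prod>j<n. g j)"
proof -
  have "opoly q \<alpha> \<beta> n x = V (Suc n) x * (\<Prod>j<n. g j) \<and>
        opoly q \<alpha> \<beta> (Suc n) x = V (Suc (Suc n)) x * (\<Prod>j<Suc n. g j)" for n
  proof (induction n)
    case 0 then show ?case using g_pos[of 0] by simp
  next
    case (Suc n)
    have gn: "g n > 0" "g (Suc n) > 0" using g_pos by auto
    have p1: "(\<Prod>j<Suc n. g j) = (\<Prod>j<n. g j) * g n" by simp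
    have p2: "(\<Prod>j<Suc (Suc n). g j) = (\<Prod>j<n. g j) * g n * g (Suc n)" by simp
    have "opoly q \<alpha> \<beta> (Suc (Suc n)) x = x * opoly q \<alpha> \<beta> (Suc n) x - g n * g (Suc n) * opoly q \<alpha> \<beta> n x"
      by simp
    also have "\<dots> = x * (V (Suc (Suc n)) x * (\<Prod>j<Suc n. g j)) - g n * g (Suc n) * (V (Suc n) x * (\<Prod>j<n. g j))"
      using Suc.IH by simp
    also have "\<dots> = V (Suc (Suc (Suc n))) x * (\<Prod>j<Suc (Suc n). g j)"
      unfolding p1 p2 using gn by (simp add: field_simps)
    finally show ?case using Suc.IH by simp
  qed
  then show ?thesis by simp
qed

lemma V_neg: "V n (- x) = (-1) ^ Suc n * V n x"
proof -
  have "V n (- x) = (-1) ^ Suc n * V n x \<and> V (Suc n) (- x) = (-1) ^ Suc (Suc n) * V (Suc n) x" for n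
  proof (induction n)
    case 0 then show ?case by simp
  next
    case (Suc n) then show ?case by (simp add: field_simps)
  qed
  then show ?thesis by simp
qed

end

locale qmeas = qset +
  fixes M :: "real measure"
  assumes PS: "prob_space M" and SM: "sets M = sets borel"
    and INT: "\<And>m n. integrable M (\<lambda>x. opoly q \<alpha> \<beta> m x * opoly q \<alpha> \<beta> n x)"
    and ORTH: "\<And>m n. (\<integral>x. opoly q \<alpha> \<beta> m x * opoly q \<alpha> \<beta> n x \<partial>M)
              = (if m = n then (\<Prod>j<n. gam q \<alpha> \<beta> j * gam q \<alpha> \<beta> (Suc j)) else 0)"
begin

sublocale P: prob_space M by (rule PS)

declare V.simps(3)[simp del]



lemma space_M: "space M = UNIV"
  using sets_eq_imp_space_eq[OF SM] by simp

lemma sets_M[measurable]: "A \<in> sets borel \<Longrightarrow> A \<in> sets M"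
  using SM by simp

lemma ident_meas: "(\<lambda>x. x) \<in> borel_measurable M"
  by (rule measurable_ident_sets[OF SM])

lemma V_meas: "V n \<in> borel_measurable M"
proof -
  have "V n \<in> borel_measurable M \<and> V (Suc n) \<in> borel_measurable M" for n
  proof (induction n)
    case 0 then show ?case by simp
  next
    case (Suc n)
    have "(\<lambda>x. x * V (Suc n) x / g n - V n x) \<in> borel_measurable M"
      using Suc ident_meas by (intro borel_measurable_diff borel_measurable_divide borel_measurable_times) auto
    moreover have "V (Suc (Suc n)) = (\<lambda>x. x * V (Suc n) x / g n - V n x)"
      by (simp add: fun_eq_iff V.simps(3))
    ultimately show ?case using Suc by simp
  qed
  then show ?thesis by simp
qed

definition Pi :: "nat \<Rightarrow> real" where "Pi n = (\<Prod>j<n. g j)"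

lemma Pi_pos: "Pi n > 0" unfolding Pi_def using g_pos by (intro prod_pos) auto

lemma V_Suc_opoly: "V (Suc n) x = opoly q \<alpha> \<beta> n x / Pi n"
proof -
  have "opoly q \<alpha> \<beta> n x = V (Suc n) x * Pi n" using V_opoly[of n x] unfolding Pi_def .
  then show ?thesis using Pi_pos[of n] by (simp add: field_simps)
qed

lemma V_int0: "integrable M (\<lambda>x. V m x * V n x)"
proof (cases m)
  case 0 then show ?thesis by simp
next
  case (Suc m')
  show ?thesis
  proof (cases n)
    case 0 then show ?thesis by simp
  next
    case (Suc n')
    have "(\<lambda>x. V m x * V n x) = (\<lambda>x. opoly q \<alpha> \<beta> m' x * opoly q \<alpha> \<beta> n' x / (Pi m' * Pi n'))"
      unfolding \<open>m = Suc m'\<close> Suc V_Suc_opoly by (simp add: field_simps)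
    then show ?thesis using INT[of m' n'] by simp
  qed
qed

lemmas V_int = V_int0

lemma V_int_c: "integrable M (\<lambda>x. c * (V m x * V n x))"
  by (intro integrable_mult_right) (rule V_int0)

definition h :: "nat \<Rightarrow> real" where "h m = g m / g 0"

lemma h_pos: "h m > 0" unfolding h_def using g_pos by simp

lemma h_nz[simp]: "h m \<noteq> 0" using h_pos[of m] by simp

lemma h0: "h 0 = 1" unfolding h_def using g_pos[of 0] by simp

definition hhi :: real where "hhi = ghi / glo"
definition hlo :: real where "hlo = glo / ghi"

lemma h_bounds: "hlo \<le> h m" "h m \<le> hhi" "hlo > 0"
proof -
  show "hlo \<le> h m" unfolding hlo_def h_def using g_bounds[of m] g_bounds[of 0] glo_pos ghi_pos g_pos[of m] g_pos[of 0]
    by (intro frac_le) auto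
  show "h m \<le> hhi" unfolding hhi_def h_def using g_bounds[of m] g_bounds[of 0] glo_pos ghi_pos g_pos[of m] g_pos[of 0]
    by (intro frac_le) auto
  show "hlo > 0" unfolding hlo_def using glo_pos ghi_pos by simp
qed

lemma prod_tele: "(\<Prod>j<n. g j * g (Suc j)) = Pi n ^ 2 * h n"
proof (induction n)
  case 0 then show ?case by (simp add: Pi_def h0)
next
  case (Suc n)
  have "(\<Prod>j<Suc n. g j * g (Suc j)) = (\<Prod>j<n. g j * g (Suc j)) * (g n * g (Suc n))" by simp
  also have "\<dots> = Pi n ^ 2 * h n * (g n * g (Suc n))" by (simp only: Suc.IH)
  also have "\<dots> = Pi (Suc n) ^ 2 * h (Suc n)"
    unfolding Pi_def h_def using g_pos[of 0] g_pos[of n] by (simp add: field_simps power2_eq_square)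
  finally show ?case .
qed

lemma V_orth: "(\<integral>x. V (Suc m) x * V (Suc n) x \<partial>M) = (if m = n then h m else 0)"
proof -
  have "(\<lambda>x. V (Suc m) x * V (Suc n) x) = (\<lambda>x. opoly q \<alpha> \<beta> m x * opoly q \<alpha> \<beta> n x / (Pi m * Pi n))"
    unfolding V_Suc_opoly by (simp add: field_simps)
  then have "(\<integral>x. V (Suc m) x * V (Suc n) x \<partial>M) = (\<integral>x. opoly q \<alpha> \<beta> m x * opoly q \<alpha> \<beta> n x \<partial>M) / (Pi m * Pi n)"
    by simp
  also have "\<dots> = (if m = n then h m else 0)"
    unfolding ORTH prod_tele using Pi_pos[of m] Pi_pos[of n] by (simp add: power2_eq_square)
  finally show ?thesis .
qed

definition I2 :: "nat \<Rightarrow> real" where "I2 n = (if n = 0 then 0 else h (n - 1))"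

lemma V_sq_int: "(\<integral>x. V n x * V n x \<partial>M) = I2 n"
  by (cases n) (auto simp: I2_def V_orth)

lemma V_cross: "(\<integral>x. V (Suc n) x * V n x \<partial>M) = 0"
  by (cases n) (auto simp: V_orth)

lemma I2_le: "I2 n \<le> hhi"
  unfolding I2_def using h_bounds h_pos hlo_def by (auto intro: order_trans[OF _ h_bounds(2)] simp: less_imp_le)

definition QN :: "real \<Rightarrow> nat \<Rightarrow> real \<Rightarrow> real" where
  "QN x0 N x = (\<Sum>m<N. V (Suc m) x0 * V (Suc m) x / h m)"

definition KN :: "real \<Rightarrow> nat \<Rightarrow> real" where
  "KN x0 N = (\<Sum>m<N. (V (Suc m) x0)^2 / h m)"

lemma QN_x0: "QN x0 N x0 = KN x0 N"
  unfolding QN_def KN_def by (simp add: power2_eq_square)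

lemma KN_ge1: "N \<ge> 1 \<Longrightarrow> KN x0 N \<ge> 1"
proof -
  assume "N \<ge> 1"
  then have "{..<N} = insert 0 ({..<N} - {0})" by auto
  then have "KN x0 N = (V 1 x0)^2 / h 0 + (\<Sum>m\<in>{..<N} - {0}. (V (Suc m) x0)^2 / h m)"
    unfolding KN_def by (metis (no_types, lifting) One_nat_def finite_Diff finite_lessThan insertCI
        sum.remove)
  moreover have "(\<Sum>m\<in>{..<N} - {0}. (V (Suc m) x0)^2 / h m) \<ge> 0"
    using h_pos by (auto intro!: sum_nonneg divide_nonneg_pos)
  ultimately show ?thesis by (simp add: h0)
qed

lemma KN_mono: "KN x0 N \<le> KN x0 (Suc N)"
  unfolding KN_def using h_pos[of N] by simp

lemma QV_int: "integrable M (\<lambda>x. QN x0 N x * V n x)"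
proof -
  have "(\<lambda>x. QN x0 N x * V n x) = (\<lambda>x. \<Sum>m<N. (V (Suc m) x0 / h m) * (V (Suc m) x * V n x))"
    unfolding QN_def sum_distrib_right by (intro ext sum.cong) (auto simp: field_simps)
  then show ?thesis using V_int_c by simp
qed

lemma QV_integral: "(\<integral>x. QN x0 N x * V (Suc n) x \<partial>M) = (if n < N then V (Suc n) x0 else 0)"
proof -
  have "(\<lambda>x. QN x0 N x * V (Suc n) x) = (\<lambda>x. \<Sum>m<N. (V (Suc m) x0 / h m) * (V (Suc m) x * V (Suc n) x))"
    unfolding QN_def sum_distrib_right by (intro ext sum.cong) (auto simp: field_simps)
  then have "(\<integral>x. QN x0 N x * V (Suc n) x \<partial>M)
      = (\<integral>x. (\<Sum>m<N. (V (Suc m) x0 / h m) * (V (Suc m) x * V (Suc n) x)) \<partial>M)"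
    by simp
  also have "\<dots> = (\<Sum>m<N. (\<integral>x. (V (Suc m) x0 / h m) * (V (Suc m) x * V (Suc n) x) \<partial>M))"
    by (rule Bochner_Integration.integral_sum) (rule V_int_c)
  also have "\<dots> = (\<Sum>m<N. V (Suc m) x0 / h m * (\<integral>x. V (Suc m) x * V (Suc n) x \<partial>M))"
    by (simp only: integral_mult_right_zero)
  finally have "(\<integral>x. QN x0 N x * V (Suc n) x \<partial>M)
      = (\<Sum>m<N. V (Suc m) x0 / h m * (\<integral>x. V (Suc m) x * V (Suc n) x \<partial>M))" .
  also have "\<dots> = (\<Sum>m<N. if m = n then V (Suc n) x0 else 0)"
    unfolding V_orth using h_pos by (intro sum.cong) auto
  also have "\<dots> = (if n < N then V (Suc n) x0 else 0)"
    by (simp add: sum.delta')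
  finally show ?thesis .
qed

lemma Q_int: "integrable M (QN x0 N)"
  using QV_int[of x0 N 1] by simp

lemma Q_integral: "N \<ge> 1 \<Longrightarrow> (\<integral>x. QN x0 N x \<partial>M) = 1"
  using QV_integral[of x0 N 0] by simp

lemma Q2_int: "integrable M (\<lambda>x. (QN x0 N x)^2)"
proof -
  have "(\<lambda>x. (QN x0 N x)^2) = (\<lambda>x. \<Sum>m<N. V (Suc m) x0 / h m * (QN x0 N x * V (Suc m) x))"
    by (auto simp: power2_eq_square QN_def sum_distrib_left sum_distrib_right mult_ac divide_inverse)
  then show ?thesis using QV_int by (simp add: integrable_sum)
qed

lemma Q2_integral: "(\<integral>x. (QN x0 N x)^2 \<partial>M) = KN x0 N"
proof -
  have "(\<lambda>x. (QN x0 N x)^2) = (\<lambda>x. \<Sum>m<N. V (Suc m) x0 / h m * (QN x0 N x * V (Suc m) x))"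
    by (auto simp: power2_eq_square QN_def sum_distrib_left sum_distrib_right mult_ac divide_inverse)
  then have "(\<integral>x. (QN x0 N x)^2 \<partial>M) = (\<Sum>m<N. V (Suc m) x0 / h m * (\<integral>x. QN x0 N x * V (Suc m) x \<partial>M))"
    using QV_int by (simp add: integral_sum)
  also have "\<dots> = KN x0 N"
    unfolding QV_integral KN_def by (intro sum.cong) (auto simp: power2_eq_square)
  finally show ?thesis .
qed

lemma CD: "(x - x0) * QN x0 N x = g 0 * (V (Suc N) x * V N x0 - V N x * V (Suc N) x0)"
proof -
  have G: "(x - x0) * (\<Sum>m<N. V (Suc m) x * V (Suc m) x0 / g m)
     = (V (Suc N) x * V N x0 - V N x * V (Suc N) x0) - (V 1 x * V 0 x0 - V 0 x * V 1 x0)"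
  proof -
    have c: "\<And>m. g m \<noteq> 0" using g_pos by (metis less_irrefl)
    show ?thesis by (rule green_sum[of g "\<lambda>m. V m x" x "\<lambda>m. V m x0" x0 N, OF c V_rec V_rec])
  qed
  have QE: "QN x0 N x = g 0 * (\<Sum>m<N. V (Suc m) x * V (Suc m) x0 / g m)"
    unfolding QN_def h_def sum_distrib_left using g_pos[of 0]
    by (intro sum.cong) (auto simp: field_simps)
  have "(x - x0) * QN x0 N x = g 0 * ((x - x0) * (\<Sum>m<N. V (Suc m) x * V (Suc m) x0 / g m))"
    unfolding QE by (rule mult.left_commute)
  also have "\<dots> = g 0 * ((V (Suc N) x * V N x0 - V N x * V (Suc N) x0) - (V 1 x * V 0 x0 - V 0 x * V 1 x0))"
    by (simp only: G)
  finally show ?thesis by simp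
qed

definition RN :: "real \<Rightarrow> nat \<Rightarrow> real" where
  "RN x0 N = (\<integral>x. ((x - x0) * QN x0 N x)^2 \<partial>M)"

lemma R_int: "integrable M (\<lambda>x. ((x - x0) * QN x0 N x)^2)"
proof -
  have "(\<lambda>x. ((x - x0) * QN x0 N x)^2) = (\<lambda>x. (g 0)^2 * ((V N x0)^2 * (V (Suc N) x * V (Suc N) x)
        - 2 * V N x0 * V (Suc N) x0 * (V (Suc N) x * V N x) + (V (Suc N) x0)^2 * (V N x * V N x)))"
    unfolding CD by (auto simp: power2_eq_square algebra_simps)
  then show ?thesis using V_int by simp
qed

lemma R_eq: "RN x0 N = (g 0)^2 * ((V N x0)^2 * I2 (Suc N) + (V (Suc N) x0)^2 * I2 N)"
proof -
  have "(\<lambda>x. ((x - x0) * QN x0 N x)^2) = (\<lambda>x. (g 0)^2 * ((V N x0)^2 * (V (Suc N) x * V (Suc N) x)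
        - 2 * V N x0 * V (Suc N) x0 * (V (Suc N) x * V N x) + (V (Suc N) x0)^2 * (V N x * V N x)))"
    unfolding CD by (auto simp: power2_eq_square algebra_simps)
  then show ?thesis unfolding RN_def using V_int
    by (simp add: V_sq_int V_cross)
qed

lemma R_le: "RN x0 N \<le> (g 0)^2 * hhi * ((V N x0)^2 + (V (Suc N) x0)^2)"
proof -
  have "(V N x0)^2 * I2 (Suc N) + (V (Suc N) x0)^2 * I2 N \<le> (V N x0)^2 * hhi + (V (Suc N) x0)^2 * hhi"
    using I2_le by (intro add_mono mult_left_mono) auto
  then have "(g 0)^2 * ((V N x0)^2 * I2 (Suc N) + (V (Suc N) x0)^2 * I2 N) \<le> (g 0)^2 * ((V N x0)^2 * hhi + (V (Suc N) x0)^2 * hhi)"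
    by (rule mult_left_mono) simp
  then show ?thesis unfolding R_eq by (simp add: algebra_simps)
qed

lemma atom_le: "N \<ge> 1 \<Longrightarrow> measure M {x0} \<le> 1 / KN x0 N"
proof -
  assume N: "N \<ge> 1"
  have K: "KN x0 N \<ge> 1" by (rule KN_ge1[OF N])
  have "(\<integral>x. (QN x0 N x)^2 * indicator {x0} x \<partial>M) = (\<integral>x. (KN x0 N)^2 * indicator {x0} x \<partial>M)"
    by (rule Bochner_Integration.integral_cong[OF refl]) (auto simp: QN_x0 split: split_indicator)
  also have "\<dots> = (KN x0 N)^2 * measure M {x0}"
    using space_M by simp
  finally have e: "(\<integral>x. (QN x0 N x)^2 * indicator {x0} x \<partial>M) = (KN x0 N)^2 * measure M {x0}" .
  have "(\<integral>x. (QN x0 N x)^2 * indicator {x0} x \<partial>M) \<le> (\<integral>x. (QN x0 N x)^2 \<partial>M)"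
  proof (rule integral_mono)
    show "integrable M (\<lambda>x. (QN x0 N x)^2 * indicator {x0} x)"
      using integrable_mult_indicator[OF _ Q2_int, of "{x0}" x0 N] by (simp add: mult.commute)
  qed (auto simp: Q2_int split: split_indicator)
  then have "(KN x0 N)^2 * measure M {x0} \<le> KN x0 N" unfolding e Q2_integral .
  then have "KN x0 N * (KN x0 N * measure M {x0}) \<le> KN x0 N * 1" by (simp add: power2_eq_square mult.assoc)
  then have "KN x0 N * measure M {x0} \<le> 1" using K by simp
  then show ?thesis using K by (simp add: field_simps)
qed

end

lemma amgm_abs: fixes y t :: real assumes "t > 0" shows "2 * \<bar>y\<bar> \<le> t * y^2 + 1 / t"
proof -
  have "0 \<le> (t * \<bar>y\<bar> - 1)^2 / t" using assms by simp
  also have "(t * \<bar>y\<bar> - 1)^2 / t = t * y^2 + 1 / t - 2 * \<bar>y\<bar>"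
    using assms by (simp add: field_simps power2_eq_square)
  finally show ?thesis by simp
qed

context qmeas begin

definition Ebad :: "real \<Rightarrow> real \<Rightarrow> real set" where
  "Ebad x0 e = {x. x \<noteq> x0 \<and> \<bar>x - x0\<bar> < e}"

lemma Ebad_sets: "Ebad x0 e \<in> sets M"
proof -
  have "Ebad x0 e = ball x0 e - {x0}" unfolding Ebad_def ball_def dist_real_def by (auto simp: abs_minus_commute)
  then show ?thesis by (auto intro!: sets_M)
qed

lemma Q_ind_integral: "(\<integral>x. indicator {x0} x * QN x0 N x \<partial>M) = KN x0 N * measure M {x0}"
proof -
  have "(\<integral>x. indicator {x0} x * QN x0 N x \<partial>M) = (\<integral>x. KN x0 N * indicator {x0} x \<partial>M)"
    by (rule Bochner_Integration.integral_cong[OF refl]) (auto simp: QN_x0 split: split_indicator)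
  also have "\<dots> = KN x0 N * measure M {x0}"
    using space_M by simp
  finally show ?thesis .
qed

lemma key_ineq:
  assumes N: "N \<ge> 1" and e: "e > 0" and s: "s > 0" and t: "t > 0"
  shows "\<bar>1 - measure M {x0} * KN x0 N\<bar>
     \<le> (t * RN x0 N + 1 / t) / (2 * e) + (s * KN x0 N + measure M (Ebad x0 e) / s) / 2"
proof -
  let ?Q = "QN x0 N"
  define B where "B x = (t * ((x - x0) * ?Q x)^2 + 1 / t) / (2 * e) + (s * (?Q x)^2 + indicator (Ebad x0 e) x / s) / 2" for x
  have i1: "integrable M (\<lambda>x. indicator {x0} x * ?Q x)"
    using integrable_mult_indicator[OF _ Q_int, of "{x0}" x0 N] by simp
  have i2: "integrable M (\<lambda>x. indicator (- {x0}) x * ?Q x)"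
    using integrable_mult_indicator[OF _ Q_int, of "- {x0}" x0 N] by (simp add: sets_M)
  have iE: "integrable M (indicator (Ebad x0 e) :: real \<Rightarrow> real)"
    using Ebad_sets P.emeasure_finite by (intro integrable_real_indicator) (auto simp: less_top[symmetric])
  have iB: "integrable M B"
    unfolding B_def using R_int Q2_int iE by simp
  have split: "?Q x = indicator {x0} x * ?Q x + indicator (- {x0}) x * ?Q x" for x
    by (auto split: split_indicator)
  have "1 = (\<integral>x. ?Q x \<partial>M)" using Q_integral[OF N] by simp
  also have "\<dots> = (\<integral>x. indicator {x0} x * ?Q x \<partial>M) + (\<integral>x. indicator (- {x0}) x * ?Q x \<partial>M)"
    by (subst split) (rule Bochner_Integration.integral_add[OF i1 i2])
  finally have one: "1 - measure M {x0} * KN x0 N = (\<integral>x. indicator (- {x0}) x * ?Q x \<partial>M)"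
    unfolding Q_ind_integral by (simp add: algebra_simps)
  have pw: "\<bar>indicator (- {x0}) x * ?Q x\<bar> \<le> B x" for x
  proof -
    have b1: "0 \<le> (t * ((x - x0) * ?Q x)^2 + 1 / t) / (2 * e)" using t e by simp
    have b2: "0 \<le> (s * (?Q x)^2 + indicator (Ebad x0 e) x / s) / 2" using s by simp
    show ?thesis
    proof (cases "x = x0")
      case True then show ?thesis using b1 b2 unfolding B_def by simp
    next
      case False
      have ind1: "indicator (- {x0}) x * ?Q x = ?Q x" using False by simp
      show ?thesis
      proof (cases "\<bar>x - x0\<bar> < e")
        case True
        then have "indicator (Ebad x0 e) x = (1::real)" using False by (simp add: Ebad_def)
        moreover have "2 * \<bar>?Q x\<bar> \<le> s * (?Q x)^2 + 1 / s" by (rule amgm_abs[OF s])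
        ultimately have "\<bar>?Q x\<bar> \<le> (s * (?Q x)^2 + indicator (Ebad x0 e) x / s) / 2" by simp
        then show ?thesis using b1 unfolding B_def ind1 by linarith
      next
        case F2: False
        have "e * \<bar>?Q x\<bar> \<le> \<bar>x - x0\<bar> * \<bar>?Q x\<bar>" using F2 by (intro mult_right_mono) auto
        also have "\<dots> = \<bar>(x - x0) * ?Q x\<bar>" by (simp add: abs_mult)
        also have "2 * \<bar>(x - x0) * ?Q x\<bar> \<le> t * ((x - x0) * ?Q x)^2 + 1 / t" by (rule amgm_abs[OF t])
        hence "\<bar>(x - x0) * ?Q x\<bar> \<le> (t * ((x - x0) * ?Q x)^2 + 1 / t) / 2" by simp
        finally have "e * \<bar>?Q x\<bar> \<le> (t * ((x - x0) * ?Q x)^2 + 1 / t) / 2" .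
        then have "\<bar>?Q x\<bar> \<le> (t * ((x - x0) * ?Q x)^2 + 1 / t) / (2 * e)"
          using e by (simp add: field_simps)
        then show ?thesis using b2 unfolding B_def ind1 by linarith
      qed
    qed
  qed
  have "\<bar>1 - measure M {x0} * KN x0 N\<bar> \<le> (\<integral>x. \<bar>indicator (- {x0}) x * ?Q x\<bar> \<partial>M)"
    unfolding one by (rule integral_abs_bound)
  also have "\<dots> \<le> (\<integral>x. B x \<partial>M)"
    using i2 iB pw by (intro integral_mono) auto
  also have "(\<integral>x. B x \<partial>M) = (t * RN x0 N + 1 / t) / (2 * e) + (s * KN x0 N + measure M (Ebad x0 e) / s) / 2"
  proof -
    have "(\<integral>x. B x \<partial>M) = (\<integral>x. (t * ((x - x0) * ?Q x)^2 + 1 / t) / (2 * e) \<partial>M)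
        + (\<integral>x. (s * (?Q x)^2 + indicator (Ebad x0 e) x / s) / 2 \<partial>M)"
      unfolding B_def using R_int Q2_int iE by (intro Bochner_Integration.integral_add) simp_all
    also have "(\<integral>x. (t * ((x - x0) * ?Q x)^2 + 1 / t) / (2 * e) \<partial>M) = (t * RN x0 N + 1 / t) / (2 * e)"
      unfolding RN_def using R_int by (simp add: Bochner_Integration.integral_add P.prob_space)
    also have "(\<integral>x. (s * (?Q x)^2 + indicator (Ebad x0 e) x / s) / 2 \<partial>M) = (s * KN x0 N + measure M (Ebad x0 e) / s) / 2"
      using Q2_int iE space_M by (simp add: Bochner_Integration.integral_add Q2_integral)
    finally show ?thesis .
  qed
  finally show ?thesis .
qed


definition fK :: "real \<Rightarrow> nat \<Rightarrow> real" where "fK x0 m = (V (Suc m) x0)^2 / h m"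

lemma fK_nonneg: "fK x0 m \<ge> 0" unfolding fK_def using h_pos[of m] by simp

lemma KN_fK: "KN x0 N = (\<Sum>m<N. fK x0 m)" unfolding KN_def fK_def ..

lemma Ebad_lim: "(\<lambda>n. measure M (Ebad x0 (1 / Suc n))) \<longlonglongrightarrow> 0"
proof -
  have dec: "decseq (\<lambda>n. Ebad x0 (1 / Suc n))"
    unfolding decseq_def Ebad_def by (auto simp: frac_le elim: order.strict_trans2)
  have empty: "(\<Inter>n. Ebad x0 (1 / Suc n)) = {}"
  proof safe
    fix x assume x: "x \<in> (\<Inter>n. Ebad x0 (1 / Suc n))"
    then have "x \<noteq> x0" by (auto simp: Ebad_def)
    then have "\<bar>x - x0\<bar> > 0" by simp
    then obtain n :: nat where "1 / Suc n < \<bar>x - x0\<bar>"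
      by (metis less_trans_Suc nat_approx_posE of_nat_Suc)
    moreover have "\<bar>x - x0\<bar> < 1 / Suc n" using x by (auto simp: Ebad_def)
    ultimately show "x \<in> {}" by simp
  qed
  have "(\<lambda>n. measure M (Ebad x0 (1 / Suc n))) \<longlonglongrightarrow> measure M (\<Inter>n. Ebad x0 (1 / Suc n))"
    using Ebad_sets dec by (intro P.finite_Lim_measure_decseq) auto
  then show ?thesis unfolding empty by simp
qed

lemma atom_summable:
  assumes S: "summable (fK x0)"
  shows "measure M {x0} * suminf (fK x0) = 1"
proof (rule ccontr)
  define a where "a = measure M {x0}"
  define K where "K = suminf (fK x0)"
  assume ne: "measure M {x0} * suminf (fK x0) \<noteq> 1"
  define d where "d = \<bar>1 - a * K\<bar>"
  have dpos: "d > 0" using ne unfolding d_def a_def K_def by simp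
  define \<delta> where "\<delta> = d / 4"
  have dp: "\<delta> > 0" using dpos by (simp add: \<delta>_def)
  have KN_lim: "KN x0 \<longlonglongrightarrow> K"
    unfolding K_def KN_fK[abs_def] by (rule summable_LIMSEQ[OF S])
  have K1: "K \<ge> 1"
  proof -
    have "KN x0 1 \<le> K" unfolding K_def KN_fK
      by (rule sum_le_suminf[OF S]) (auto simp: fK_nonneg)
    then show ?thesis using KN_ge1[of 1 x0] by simp
  qed
  have f0: "fK x0 \<longlonglongrightarrow> 0" by (rule summable_LIMSEQ_zero[OF S])
  have sqS: "(\<lambda>m. (V (Suc m) x0)^2) \<longlonglongrightarrow> 0"
  proof (rule Lim_null_comparison)
    show "\<forall>\<^sub>F m in sequentially. norm ((V (Suc m) x0)^2) \<le> fK x0 m * hhi"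
    proof (intro always_eventually allI)
      fix m
      have "(V (Suc m) x0)^2 = fK x0 m * h m" unfolding fK_def by simp
      also have "\<dots> \<le> fK x0 m * hhi" using h_bounds(2)[of m] fK_nonneg[of x0 m] by (intro mult_left_mono) auto
      finally show "norm ((V (Suc m) x0)^2) \<le> fK x0 m * hhi" by simp
    qed
    show "(\<lambda>m. fK x0 m * hhi) \<longlonglongrightarrow> 0" using tendsto_mult_left_zero[OF f0] by simp
  qed
  have sq: "(\<lambda>m. (V m x0)^2) \<longlonglongrightarrow> 0"
    using sqS filterlim_sequentially_Suc[of "\<lambda>m. (V m x0)^2"] by simp
  have R0: "RN x0 \<longlonglongrightarrow> 0"
  proof (rule Lim_null_comparison)
    show "\<forall>\<^sub>F N in sequentially. norm (RN x0 N) \<le> (g 0)^2 * hhi * ((V N x0)^2 + (V (Suc N) x0)^2)"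
    proof (intro always_eventually allI)
      fix N
      have "RN x0 N \<ge> 0" unfolding RN_def by simp
      then show "norm (RN x0 N) \<le> (g 0)^2 * hhi * ((V N x0)^2 + (V (Suc N) x0)^2)" using R_le by simp
    qed
    show "(\<lambda>N. (g 0)^2 * hhi * ((V N x0)^2 + (V (Suc N) x0)^2)) \<longlonglongrightarrow> 0"
      using tendsto_mult_right_zero[OF tendsto_add_zero[OF sq sqS]] by simp
  qed
  have Kpos: "K > 0" using K1 by simp
  have "\<delta>^2 / K > 0" using dp Kpos by simp
  then obtain n where n: "measure M (Ebad x0 (1 / Suc n)) < \<delta>^2 / K"
    using order_tendstoD(2)[OF Ebad_lim[of x0]] by (meson eventually_sequentially le_refl)
  define e where "e = 1 / real (Suc n)"
  define \<mu> where "\<mu> = measure M (Ebad x0 e)"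
  have mu: "\<mu> < \<delta>^2 / K" using n unfolding \<mu>_def e_def by simp
  have epos: "e > 0" unfolding e_def by simp
  define s where "s = \<delta> / K"
  define t where "t = 1 / (e * \<delta>)"
  have spos: "s > 0" unfolding s_def using dp Kpos by simp
  have tpos: "t > 0" unfolding t_def using dp epos by simp
  have lhs: "(\<lambda>N. \<bar>1 - a * KN x0 N\<bar>) \<longlonglongrightarrow> d"
    unfolding d_def by (intro tendsto_intros KN_lim)
  have rhs: "(\<lambda>N. (t * RN x0 N + 1 / t) / (2 * e) + (s * KN x0 N + \<mu> / s) / 2)
      \<longlonglongrightarrow> (t * 0 + 1 / t) / (2 * e) + (s * K + \<mu> / s) / 2"
    by (intro tendsto_intros KN_lim R0) (use epos in auto)
  have "d \<le> (t * 0 + 1 / t) / (2 * e) + (s * K + \<mu> / s) / 2"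
  proof (rule LIMSEQ_le[OF lhs rhs], intro exI allI impI)
    fix N :: nat assume "N \<ge> 1"
    then show "\<bar>1 - a * KN x0 N\<bar> \<le> (t * RN x0 N + 1 / t) / (2 * e) + (s * KN x0 N + \<mu> / s) / 2"
      unfolding a_def \<mu>_def by (rule key_ineq[OF _ epos spos tpos])
  qed
  also have "(t * 0 + 1 / t) / (2 * e) = \<delta> / 2" unfolding t_def using epos dp by (simp add: field_simps)
  also have "s * K = \<delta>" unfolding s_def using Kpos by simp
  also have "\<mu> / s = \<mu> * K / \<delta>" unfolding s_def using Kpos dp by simp
  also have "\<mu> * K / \<delta> < \<delta>"
  proof -
    have "\<mu> * K < \<delta>^2" using mu Kpos by (simp add: field_simps)
    then show ?thesis using dp by (simp add: field_simps power2_eq_square)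
  qed
  finally have "d < \<delta> / 2 + (\<delta> + \<delta>) / 2" by simp
  then show False unfolding \<delta>_def using dpos by simp
qed

lemma atom_nonsummable:
  assumes S: "\<not> summable (fK x0)"
  shows "measure M {x0} = 0"
proof (rule ccontr)
  assume "measure M {x0} \<noteq> 0"
  then have a: "measure M {x0} > 0" using measure_nonneg[of M "{x0}"] by (simp add: less_le)
  have "summable (fK x0)"
  proof (rule summableI_nonneg_bounded)
    show "0 \<le> fK x0 n" for n by (rule fK_nonneg)
    show "sum (fK x0) {..<N} \<le> 1 / measure M {x0}" for N
    proof (cases "N \<ge> 1")
      case True
      have "measure M {x0} \<le> 1 / KN x0 N" by (rule atom_le[OF True])
      then have "KN x0 N \<le> 1 / measure M {x0}" using a KN_ge1[OF True, of x0] by (simp add: field_simps)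
      then show ?thesis unfolding KN_fK .
    next
      case False then have "N = 0" by simp
      then show ?thesis using a by simp
    qed
  qed
  then show False using S by simp
qed

definition wt :: "real \<Rightarrow> real" where
  "wt x0 = (if summable (fK x0) then 1 / suminf (fK x0) else 0)"

lemma atom_wt: "measure M {x0} = wt x0"
proof (cases "summable (fK x0)")
  case True
  have e: "measure M {x0} * suminf (fK x0) = 1" by (rule atom_summable[OF True])
  then have "suminf (fK x0) \<noteq> 0" by auto
  then show ?thesis using e True unfolding wt_def by (simp add: field_simps)
next
  case False
  then show ?thesis using atom_nonsummable[OF False] unfolding wt_def by simp
qed

lemma fK_neg: "fK (- x) = fK x"
proof -
  have "((-1::real)^m)^2 = 1" for m by (induct m) auto
  then show ?thesis unfolding fK_def[abs_def] V_neg by (simp add: power_mult_distrib)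
qed

lemma wt_neg: "wt (- x) = wt x"
  unfolding wt_def fK_neg ..

end

context qmeas begin

definition CB :: real where "CB = CA 1 / (1 - rho)"

lemma CB_pos: "CB > 0" unfolding CB_def using CA_pos rho_lt1 by simp

lemma ps_bound:
  assumes "z \<noteq> 0" "norm z \<le> 1"
  shows "norm (ps m z) \<le> norm z ^ m / norm z * CB"
proof -
  have "norm (ps m z) = norm z ^ m / norm z * norm (Phi m z)"
    unfolding ps_eq[OF assms(1)] by (simp add: norm_mult norm_divide norm_power)
  also have "\<dots> \<le> norm z ^ m / norm z * CB"
    unfolding CB_def using Phi_bound[OF assms(2)] by (intro mult_left_mono) auto
  finally show ?thesis .
qed

lemma Phi_lim: "(\<lambda>m. Phi m z) \<longlonglongrightarrow> Ak 0 z"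
proof -
  have "(\<lambda>m. Phi m z - Ak 0 z) \<longlonglongrightarrow> 0"
  proof (rule Lim_null_comparison)
    show "\<forall>\<^sub>F m in sequentially. norm (Phi m z - Ak 0 z) \<le> q ^ m * (CA (norm z) / (1 - rho))"
      by (intro always_eventually allI Phi_minus_A0) simp
    show "(\<lambda>m. q ^ m * (CA (norm z) / (1 - rho))) \<longlonglongrightarrow> 0"
      using q0 q1 by (intro tendsto_mult_left_zero LIMSEQ_power_zero) auto
  qed
  then show ?thesis using tendsto_add[OF _ tendsto_const[of "Ak 0 z"]] by fastforce
qed

lemma Ak0_nz:
  assumes "norm z \<le> 1"
  shows "Ak 0 z \<noteq> 0"
  unfolding Ak0
proof (rule qpi_nonzero)
  fix j
  have "norm (complex_of_real q * z^2 * complex_of_real q ^ j) = q ^ Suc j * norm z ^ 2"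
    using q0 by (simp add: norm_mult norm_power)
  also have "\<dots> \<le> q ^ Suc j * 1" using assms q0 by (intro mult_left_mono power_le_one) auto
  also have "\<dots> < 1" using power_Suc_less_one[OF q0 q1, of j] by simp
  finally show "complex_of_real q * z^2 * complex_of_real q ^ j \<noteq> 1" by auto
qed

lemma V_lim0:
  assumes S: "summable (fK x0)"
  shows "(\<lambda>m. V m x0) \<longlonglongrightarrow> 0"
proof -
  have f0: "fK x0 \<longlonglongrightarrow> 0" by (rule summable_LIMSEQ_zero[OF S])
  have sqS: "(\<lambda>m. (V (Suc m) x0)^2) \<longlonglongrightarrow> 0"
  proof (rule Lim_null_comparison)
    show "\<forall>\<^sub>F m in sequentially. norm ((V (Suc m) x0)^2) \<le> fK x0 m * hhi"
    proof (intro always_eventually allI)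
      fix m
      have "(V (Suc m) x0)^2 = fK x0 m * h m" unfolding fK_def by simp
      also have "\<dots> \<le> fK x0 m * hhi" using h_bounds(2)[of m] fK_nonneg[of x0 m] by (intro mult_left_mono) auto
      finally show "norm ((V (Suc m) x0)^2) \<le> fK x0 m * hhi" by simp
    qed
    show "(\<lambda>m. fK x0 m * hhi) \<longlonglongrightarrow> 0" using tendsto_mult_left_zero[OF f0] by simp
  qed
  have sq: "(\<lambda>m. (V m x0)^2) \<longlonglongrightarrow> 0"
    using sqS filterlim_sequentially_Suc[of "\<lambda>m. (V m x0)^2"] by simp
  have "(\<lambda>m. sqrt ((V m x0)^2)) \<longlonglongrightarrow> sqrt 0" by (intro tendsto_real_sqrt sq)
  then have "(\<lambda>m. \<bar>V m x0\<bar>) \<longlonglongrightarrow> 0" by simp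
  then show ?thesis by (rule tendsto_rabs_zero_cancel)
qed

lemma ps_rec_x:
  assumes "z \<noteq> 0" "complex_of_real x0 = z + 1 / z"
  shows "complex_of_real (g m) * (ps (Suc (Suc m)) z + ps m z) = complex_of_real x0 * ps (Suc m) z"
  using ps_rec[OF assms(1)] assms(2) by simp

lemma gc_nz: "complex_of_real (g m) \<noteq> 0" using g_pos[of m] by simp

lemma wronsk:
  assumes "z \<noteq> 0" "complex_of_real x0 = z + 1 / z"
  shows "complex_of_real (V (Suc N) x0) * ps N z - complex_of_real (V N x0) * ps (Suc N) z = ps 0 z"
  using wronskian_const[of "\<lambda>m. complex_of_real (g m)" "\<lambda>m. complex_of_real (V m x0)" "complex_of_real x0"
      "\<lambda>m. ps m z" N, OF gc_nz V_rec_c ps_rec_x[OF assms]] by simp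

lemma ps_prop:
  assumes "z \<noteq> 0" "complex_of_real x0 = z + 1 / z" "ps 0 z = 0"
  shows "ps m z = ps 1 z * complex_of_real (V m x0)"
proof -
  have r2: "complex_of_real (g m) * (ps 1 z * complex_of_real (V (Suc (Suc m)) x0) + ps 1 z * complex_of_real (V m x0))
      = complex_of_real x0 * (ps 1 z * complex_of_real (V (Suc m) x0))" for m
  proof -
    have "complex_of_real (g m) * (ps 1 z * complex_of_real (V (Suc (Suc m)) x0) + ps 1 z * complex_of_real (V m x0))
        = ps 1 z * (complex_of_real (g m) * (complex_of_real (V (Suc (Suc m)) x0) + complex_of_real (V m x0)))"
      by (simp add: algebra_simps)
    also have "\<dots> = ps 1 z * (complex_of_real x0 * complex_of_real (V (Suc m) x0))"
      by (simp only: V_rec_c)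
    finally show ?thesis by (simp add: algebra_simps)
  qed
  show ?thesis
    by (rule rec_unique[of "\<lambda>m. complex_of_real (g m)" "\<lambda>m. ps m z" "complex_of_real x0"
        "\<lambda>m. ps 1 z * complex_of_real (V m x0)", OF gc_nz ps_rec_x[OF assms(1,2)] r2])
       (use assms(3) in auto)
qed

lemma summable_imp_ps0:
  assumes S: "summable (fK x0)" and z: "z \<noteq> 0" "norm z \<le> 1" and x: "complex_of_real x0 = z + 1 / z"
  shows "ps 0 z = 0"
proof -
  have V0: "(\<lambda>m. V m x0) \<longlonglongrightarrow> 0" by (rule V_lim0[OF S])
  define B where "B = 1 / norm z * CB"
  have psb: "norm (ps m z) \<le> B" for m
  proof -
    have "norm (ps m z) \<le> norm z ^ m / norm z * CB" by (rule ps_bound[OF z])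
    also have "\<dots> \<le> 1 / norm z * CB"
      using z CB_pos by (intro mult_right_mono divide_right_mono power_le_one) auto
    finally show ?thesis unfolding B_def .
  qed
  have "(\<lambda>N. complex_of_real (V (Suc N) x0) * ps N z - complex_of_real (V N x0) * ps (Suc N) z) \<longlonglongrightarrow> 0"
  proof (rule Lim_null_comparison)
    show "\<forall>\<^sub>F N in sequentially. norm (complex_of_real (V (Suc N) x0) * ps N z - complex_of_real (V N x0) * ps (Suc N) z)
        \<le> \<bar>V (Suc N) x0\<bar> * B + \<bar>V N x0\<bar> * B"
    proof (intro always_eventually allI)
      fix N
      have "norm (complex_of_real (V (Suc N) x0) * ps N z - complex_of_real (V N x0) * ps (Suc N) z)
          \<le> norm (complex_of_real (V (Suc N) x0) * ps N z) + norm (complex_of_real (V N x0) * ps (Suc N) z)"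
        by (rule norm_triangle_ineq4)
      also have "\<dots> \<le> \<bar>V (Suc N) x0\<bar> * B + \<bar>V N x0\<bar> * B"
        using psb by (intro add_mono) (auto simp: norm_mult intro!: mult_left_mono)
      finally show "norm (complex_of_real (V (Suc N) x0) * ps N z - complex_of_real (V N x0) * ps (Suc N) z)
        \<le> \<bar>V (Suc N) x0\<bar> * B + \<bar>V N x0\<bar> * B" .
    qed
    have "(\<lambda>N. V (Suc N) x0) \<longlonglongrightarrow> 0" using V0 filterlim_sequentially_Suc[of "\<lambda>N. V N x0"] by simp
    then show "(\<lambda>N. \<bar>V (Suc N) x0\<bar> * B + \<bar>V N x0\<bar> * B) \<longlonglongrightarrow> 0"
      using V0 by (intro tendsto_add_zero tendsto_mult_left_zero tendsto_rabs_zero) auto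
  qed
  then have "(\<lambda>N. ps 0 z) \<longlonglongrightarrow> 0" unfolding wronsk[OF z(1) x] .
  then show ?thesis by (simp add: LIMSEQ_const_iff)
qed

lemma ps1_nz:
  assumes z: "z \<noteq> 0" "norm z \<le> 1" and x: "complex_of_real x0 = z + 1 / z" and p0: "ps 0 z = 0"
  shows "ps 1 z \<noteq> 0"
proof
  assume p1: "ps 1 z = 0"
  have "Phi m z = 0" for m
  proof -
    have "ps m z = ps 1 z * complex_of_real (V m x0)" by (rule ps_prop[OF z(1) x p0])
    then have "ps m z = 0" using p1 by simp
    then show ?thesis using z(1) unfolding ps_eq[OF z(1)] by simp
  qed
  then have "(\<lambda>m. 0) \<longlonglongrightarrow> Ak 0 z" using Phi_lim[of z] by simp
  then have "Ak 0 z = 0" by (simp add: LIMSEQ_const_iff)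
  then show False using Ak0_nz[OF z(2)] by simp
qed

lemma unit_circle_case:
  assumes z: "norm z = 1" and x: "complex_of_real x0 = z + 1 / z"
  shows "\<not> summable (fK x0)"
proof
  assume S: "summable (fK x0)"
  have z0: "z \<noteq> 0" using z by auto
  have p0: "ps 0 z = 0" by (rule summable_imp_ps0[OF S z0 _ x]) (use z in simp)
  have "(\<lambda>m. ps 1 z * complex_of_real (V m x0)) \<longlonglongrightarrow> ps 1 z * complex_of_real 0"
    by (intro tendsto_intros V_lim0[OF S])
  moreover have "(\<lambda>m. ps m z) = (\<lambda>m. ps 1 z * complex_of_real (V m x0))"
    by (rule ext, rule ps_prop[OF z0 x p0])
  ultimately have "(\<lambda>m. ps m z) \<longlonglongrightarrow> 0" by simp
  then have "(\<lambda>m. norm (ps m z)) \<longlonglongrightarrow> 0" by (rule tendsto_norm_zero)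
  moreover have "norm (ps m z) = norm (Phi m z)" for m
    unfolding ps_eq[OF z0] using z by (simp add: norm_mult norm_divide norm_power)
  ultimately have "(\<lambda>m. norm (Phi m z)) \<longlonglongrightarrow> 0" by simp
  moreover have "(\<lambda>m. norm (Phi m z)) \<longlonglongrightarrow> norm (Ak 0 z)" by (intro tendsto_norm Phi_lim)
  ultimately have "norm (Ak 0 z) = 0" using LIMSEQ_unique by blast
  then show False using Ak0_nz[of z] z by simp
qed

lemma small_x_wt0:
  assumes "\<bar>x0\<bar> \<le> 2"
  shows "wt x0 = 0"
proof -
  define z where "z = Complex (x0 / 2) (sqrt (4 - x0^2) / 2)"
  have "\<bar>x0\<bar>^2 \<le> 2^2" using assms by (intro power_mono) auto
  then have x2: "x0^2 \<le> 4" by simp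
  have nz: "norm z = 1"
  proof -
    have "(norm z)^2 = (x0/2)^2 + (sqrt (4 - x0^2) / 2)^2" unfolding z_def cmod_def by simp
    also have "\<dots> = 1" using x2 by (simp add: power_divide add_divide_distrib[symmetric])
    finally have "cmod z = 1 \<or> cmod z = - 1" by (simp add: power2_eq_1_iff)
    then show ?thesis using norm_ge_zero[of z] by linarith
  qed
  have "z * cnj z = 1" using nz by (simp add: complex_norm_square[symmetric])
  moreover have z0: "z \<noteq> 0" using nz by auto
  moreover have "cnj z = z * cnj z / z" using z0 by simp
  ultimately have inv: "1 / z = cnj z" by simp
  have "z + 1 / z = complex_of_real x0"
    unfolding inv by (simp add: complex_add_cnj z_def)
  then have "\<not> summable (fK x0)" using unit_circle_case[OF nz] by simp
  then show ?thesis unfolding wt_def by simp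
qed

end

context qmeas begin

lemma ps_Suc: "ps (Suc m) w = w ^ m * Phi (Suc m) w"
  unfolding ps_def by simp

lemma ps_Suc_bound:
  assumes "norm w \<le> r" "r \<le> 1"
  shows "norm (ps (Suc m) w) \<le> r ^ m * CB"
proof -
  have "norm (ps (Suc m) w) = norm w ^ m * norm (Phi (Suc m) w)"
    unfolding ps_Suc by (simp add: norm_mult norm_power)
  also have "\<dots> \<le> r ^ m * CB"
  proof -
    have r0: "r \<ge> 0" using assms(1) norm_ge_zero order_trans by blast
    show ?thesis
      unfolding CB_def using Phi_bound[of w 1] assms r0
      by (intro mult_mono power_mono) auto
  qed
  finally show ?thesis .
qed

lemma ps0_holo: "ps 0 holomorphic_on (- {0})"
proof -
  have "ps 0 = (\<lambda>w. w powi (-1) * Phi 0 w)" unfolding ps_def[abs_def] by simp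
  moreover have "(\<lambda>w. w powi (-1) * Phi 0 w) holomorphic_on (- {0})"
    using Phi_holo_UNIV[of 0] by (intro holomorphic_intros) (auto intro: holomorphic_on_subset)
  ultimately show ?thesis by simp
qed

lemma ps0_deriv:
  assumes "w \<noteq> 0"
  shows "(ps 0 has_field_derivative deriv (ps 0) w) (at w)"
  using ps0_holo assms by (intro holomorphic_derivI) auto

lemma ps_psi0: "psi_plus q \<alpha> \<beta> (-1) = ps 0"
  unfolding ps_psi[abs_def] by simp

lemma ps_psi1: "psi_plus q \<alpha> \<beta> 0 = ps 1"
  unfolding ps_psi[abs_def] by simp

lemma zplus_inj: "0 < z \<Longrightarrow> z < 1 \<Longrightarrow> 0 < t \<Longrightarrow> t < 1 \<Longrightarrow> z + 1 / z = t + 1 / (t::real) \<Longrightarrow> z = t"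
proof (rule ccontr)
  assume a: "0 < z" "z < 1" "0 < t" "t < 1" "z + 1 / z = t + 1 / t" "z \<noteq> t"
  have "(z - t) * (1 - 1 / (z * t)) = (z + 1 / z) - (t + 1 / t)"
    using a by (simp add: field_simps)
  also have "\<dots> = 0" using a by simp
  finally have "1 - 1 / (z * t) = 0" using a by simp
  then have "z * t = 1" using a by (simp add: field_simps)
  moreover have "z * t < 1 * 1" using a by (intro mult_strict_mono) auto
  ultimately show False by simp
qed

definition zx :: "real \<Rightarrow> real" where "zx x0 = (x0 - sqrt (x0^2 - 4)) / 2"

lemma zx_props:
  assumes "x0 > 2"
  shows "0 < zx x0" "zx x0 < 1" "zx x0 + 1 / zx x0 = x0"
proof -
  have "2^2 \<le> x0^2" using assms by (intro power_mono) auto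
  then have s0: "x0^2 - 4 \<ge> 0" by simp
  have ss: "(sqrt (x0^2 - 4))^2 = x0^2 - 4" using s0 by simp
  have sp: "sqrt (x0^2 - 4) \<ge> 0" using s0 by simp
  have "sqrt (x0^2 - 4) < x0"
  proof -
    have "sqrt (x0^2 - 4) < sqrt (x0^2)" using assms by (intro real_sqrt_less_mono) auto
    then show ?thesis using assms by simp
  qed
  then show z0: "0 < zx x0" unfolding zx_def by simp
  have "x0 - 2 < sqrt (x0^2 - 4)"
  proof -
    have "(x0 - 2)^2 < x0^2 - 4" using assms by (simp add: power2_eq_square algebra_simps)
    then have "sqrt ((x0 - 2)^2) < sqrt (x0^2 - 4)" by (intro real_sqrt_less_mono)
    then show ?thesis using assms by simp
  qed
  then show "zx x0 < 1" unfolding zx_def by simp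
  have "zx x0 * ((x0 + sqrt (x0^2 - 4)) / 2) = 1"
    unfolding zx_def using ss by (simp add: field_simps power2_eq_square)
  then have e: "1 / zx x0 = (x0 + sqrt (x0^2 - 4)) / 2" using z0 by (simp add: field_simps)
  have "zx x0 + 1 / zx x0 = (x0 - sqrt (x0^2 - 4)) / 2 + (x0 + sqrt (x0^2 - 4)) / 2"
    unfolding e by (simp only: zx_def)
  also have "\<dots> = x0" by (simp add: field_simps)
  finally show "zx x0 + 1 / zx x0 = x0" .
qed

lemma wt_nz_large:
  assumes "x0 > 2" "wt x0 \<noteq> 0"
  shows "ps 0 (complex_of_real (zx x0)) = 0"
proof -
  have S: "summable (fK x0)" using assms(2) unfolding wt_def by (auto split: if_splits)
  have z: "0 < zx x0" "zx x0 < 1" "zx x0 + 1 / zx x0 = x0" using zx_props[OF assms(1)] by auto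
  show ?thesis
  proof (rule summable_imp_ps0[OF S])
    show "complex_of_real (zx x0) \<noteq> 0" "norm (complex_of_real (zx x0)) \<le> 1" using z by auto
    have "complex_of_real x0 = complex_of_real (zx x0 + 1 / zx x0)" using z by simp
    then show "complex_of_real x0 = complex_of_real (zx x0) + 1 / complex_of_real (zx x0)" by simp
  qed
qed

end

context qmeas begin

definition tm :: "complex \<Rightarrow> nat \<Rightarrow> complex \<Rightarrow> complex" where
  "tm zc m w = ps (Suc m) zc * ps (Suc m) w / complex_of_real (g m)"

definition S2 :: "complex \<Rightarrow> complex \<Rightarrow> complex" where
  "S2 zc w = (\<Sum>m. tm zc m w)"

lemma tm_bound:
  assumes "norm zc \<le> a" "a \<le> 1" "norm w \<le> r" "r \<le> 1"
  shows "norm (tm zc m w) \<le> CB^2 / glo * (a * r) ^ m"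
proof -
  have a0: "a \<ge> 0" using assms(1) norm_ge_zero order_trans by blast
  have r0: "r \<ge> 0" using assms(3) norm_ge_zero order_trans by blast
  have "norm (tm zc m w) = norm (ps (Suc m) zc) * norm (ps (Suc m) w) / g m"
    unfolding tm_def using g_pos[of m] by (simp add: norm_mult norm_divide)
  also have "\<dots> \<le> (a ^ m * CB) * (r ^ m * CB) / glo"
    using ps_Suc_bound[OF assms(1,2)] ps_Suc_bound[OF assms(3,4)] g_bounds(1)[of m] glo_pos CB_pos a0 r0
    by (intro frac_le mult_mono mult_nonneg_nonneg) auto
  also have "\<dots> = CB^2 / glo * (a * r) ^ m" by (simp add: power2_eq_square power_mult_distrib field_simps)
  finally show ?thesis .
qed

lemma S2_sums:
  assumes "norm zc \<le> a" "a < 1" "norm w \<le> r" "r \<le> 1"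
  shows "(\<lambda>m. tm zc m w) sums S2 zc w"
proof -
  have a0: "a \<ge> 0" using assms(1) norm_ge_zero order_trans by blast
  have r0: "r \<ge> 0" using assms(3) norm_ge_zero order_trans by blast
  have "a * r \<le> a" using a0 assms by (intro mult_left_le) auto
  then have ar: "a * r < 1" using assms by linarith
  have "summable (\<lambda>m. CB^2 / glo * (a * r) ^ m)"
    using a0 r0 ar by (intro summable_mult summable_geometric) (auto simp: abs_mult)
  then have "summable (\<lambda>m. tm zc m w)"
    by (rule summable_comparison_test'[where N=0]) (use tm_bound[OF assms(1) _ assms(3,4)] assms(2) in auto)
  then show ?thesis unfolding S2_def by (rule summable_sums)
qed

lemma S2_cont:
  assumes "norm zc \<le> a" "a < 1" "r \<le> 1" "r \<ge> 0"
  shows "continuous_on (cball 0 r) (S2 zc)"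
proof -
  have a0: "a \<ge> 0" using assms(1) norm_ge_zero order_trans by blast
  have ul: "uniform_limit (cball 0 r) (\<lambda>n w. \<Sum>m<n. tm zc m w) (\<lambda>w. \<Sum>m. tm zc m w) sequentially"
  proof (rule Weierstrass_m_test)
    fix m and w :: complex assume "w \<in> cball 0 r"
    then show "norm (tm zc m w) \<le> CB^2 / glo * (a * r) ^ m"
      using assms by (intro tm_bound) auto
  next
    show "summable (\<lambda>m. CB^2 / glo * (a * r) ^ m)"
    proof -
      have "a * r \<le> a" using a0 assms by (intro mult_left_le) auto
      then have "a * r < 1" using assms by linarith
      then show ?thesis using a0 assms by (intro summable_mult summable_geometric) (auto simp: abs_mult)
    qed
  qed
  have "continuous_on (cball 0 r) (\<lambda>w. \<Sum>m<n. tm zc m w)" for n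
  proof -
    have "continuous_on (cball 0 r) (\<lambda>w. tm zc m w)" for m
    proof -
      have "continuous_on (cball 0 r) (Phi (Suc m))" by (rule Phi_cont)
      then show ?thesis unfolding tm_def ps_Suc by (intro continuous_intros) (use gc_nz in auto)
    qed
    then show ?thesis by (intro continuous_intros)
  qed
  then show ?thesis unfolding S2_def[abs_def]
    by (intro uniform_limit_theorem[OF _ ul]) (auto intro: always_eventually)
qed

end

context qmeas begin

lemma green_lim:
  assumes z: "0 < z" "z < 1" and t: "0 < t" "t < 1" and p0: "ps 0 (complex_of_real z) = 0"
  shows "(complex_of_real (z + 1 / z) - complex_of_real (t + 1 / t)) * S2 (complex_of_real z) (complex_of_real t)
      = - ps 1 (complex_of_real z) * ps 0 (complex_of_real t)"
proof -
  define zc where "zc = complex_of_real z"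
  define w where "w = complex_of_real t"
  have zc0: "zc \<noteq> 0" and w0: "w \<noteq> 0" using z t by (auto simp: zc_def w_def)
  let ?xc = "complex_of_real (z + 1 / z)"
  let ?yw = "complex_of_real (t + 1 / t)"
  have xc: "?xc = zc + 1 / zc" unfolding zc_def by simp
  have yw: "?yw = w + 1 / w" unfolding w_def by simp
  have G: "(?xc - ?yw) * (\<Sum>m<N. tm zc m w)
      = (ps (Suc N) zc * ps N w - ps N zc * ps (Suc N) w) - (ps 1 zc * ps 0 w - ps 0 zc * ps 1 w)" for N
    unfolding tm_def
    by (rule green_sum[of "\<lambda>m. complex_of_real (g m)" "\<lambda>m. ps m zc" ?xc "\<lambda>m. ps m w" ?yw N,
          OF gc_nz ps_rec_x[OF zc0 xc] ps_rec_x[OF w0 yw]])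
  have L1: "(\<lambda>N. (?xc - ?yw) * (\<Sum>m<N. tm zc m w)) \<longlonglongrightarrow> (?xc - ?yw) * S2 zc w"
  proof -
    have "(\<lambda>m. tm zc m w) sums S2 zc w"
      by (rule S2_sums[of zc z w t]) (use z t in \<open>auto simp: zc_def w_def\<close>)
    then show ?thesis unfolding sums_def by (intro tendsto_mult_left)
  qed
  define E where "E N = ps (Suc N) zc * ps N w - ps N zc * ps (Suc N) w" for N
  have E0: "E \<longlonglongrightarrow> 0"
  proof -
    have "(\<lambda>N. E (Suc N)) \<longlonglongrightarrow> 0"
    proof (rule Lim_null_comparison)
      show "\<forall>\<^sub>F N in sequentially. norm (E (Suc N)) \<le> 2 * CB^2 * z ^ N"
      proof (intro always_eventually allI)
        fix N
        have nz: "norm zc \<le> z" "norm w \<le> 1" using z t by (auto simp: zc_def w_def)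
        have b1: "norm (ps (Suc (Suc N)) zc) \<le> z ^ Suc N * CB" by (rule ps_Suc_bound) (use nz z in auto)
        have b2: "norm (ps (Suc N) w) \<le> 1 ^ N * CB" by (rule ps_Suc_bound) (use nz in auto)
        have b3: "norm (ps (Suc N) zc) \<le> z ^ N * CB" by (rule ps_Suc_bound) (use nz z in auto)
        have b4: "norm (ps (Suc (Suc N)) w) \<le> 1 ^ Suc N * CB" by (rule ps_Suc_bound) (use nz in auto)
        have zz: "z ^ Suc N \<le> z ^ N" using z by (intro power_decreasing) auto
        have "norm (E (Suc N)) \<le> norm (ps (Suc (Suc N)) zc) * norm (ps (Suc N) w) + norm (ps (Suc N) zc) * norm (ps (Suc (Suc N)) w)"
          unfolding E_def by (metis norm_mult norm_triangle_ineq4)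
        also have "\<dots> \<le> (z ^ N * CB) * CB + (z ^ N * CB) * CB"
          using b1 b2 b3 b4 zz CB_pos z by (intro add_mono mult_mono) (auto intro: order_trans mult_right_mono)
        also have "\<dots> = 2 * CB^2 * z ^ N" by (simp add: power2_eq_square)
        finally show "norm (E (Suc N)) \<le> 2 * CB^2 * z ^ N" .
      qed
      show "(\<lambda>N. 2 * CB^2 * z ^ N) \<longlonglongrightarrow> 0"
        using z by (intro tendsto_mult_right_zero LIMSEQ_power_zero) auto
    qed
    then show ?thesis using filterlim_sequentially_Suc[of E] by simp
  qed
  have L2: "(\<lambda>N. (?xc - ?yw) * (\<Sum>m<N. tm zc m w)) \<longlonglongrightarrow> 0 - (ps 1 zc * ps 0 w - ps 0 zc * ps 1 w)"
    unfolding G using E0 unfolding E_def by (intro tendsto_diff tendsto_const)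
  have "(?xc - ?yw) * S2 zc w = 0 - (ps 1 zc * ps 0 w - ps 0 zc * ps 1 w)"
    using LIMSEQ_unique[OF L1 L2] .
  then show ?thesis using p0 unfolding zc_def w_def by simp
qed


lemma zero_case:
  assumes z: "0 < z" "z < 1" and p0: "ps 0 (complex_of_real z) = 0"
  shows "summable (fK (z + 1 / z))" "wt (z + 1 / z) > 0"
    "complex_of_real (wt (z + 1 / z)) = complex_of_real (1 / g 0) * complex_of_real ((z^2 - 1) / z^2)
        * ps 1 (complex_of_real z) / deriv (ps 0) (complex_of_real z)"
proof -
  define zc where "zc = complex_of_real z"
  define x0 where "x0 = z + 1 / z"
  define p1 where "p1 = ps 1 zc"
  define D where "D = deriv (ps 0) zc"
  have zc0: "zc \<noteq> 0" using z by (simp add: zc_def)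
  have nzc: "norm zc = z" using z by (simp add: zc_def)
  have xc: "complex_of_real x0 = zc + 1 / zc" unfolding x0_def zc_def by simp
  have p1nz: "p1 \<noteq> 0" unfolding p1_def
    by (rule ps1_nz[OF zc0 _ xc]) (use z nzc p0 zc_def in auto)
  have p0': "ps 0 zc = 0" using p0 unfolding zc_def .
  have Vps: "complex_of_real (V m x0) = ps m zc / p1" for m
  proof -
    have "ps m zc = ps 1 zc * complex_of_real (V m x0)" by (rule ps_prop[OF zc0 xc p0'])
    then show ?thesis using p1nz unfolding p1_def by (simp add: field_simps)
  qed
  have psb: "norm (ps (Suc m) zc) \<le> z ^ m * CB" for m
    by (rule ps_Suc_bound) (use nzc z in auto)
  have fKb: "norm (fK x0 m) \<le> (CB / norm p1)^2 / hlo * (z^2) ^ m" for m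
  proof -
    have "\<bar>V (Suc m) x0\<bar> = norm (ps (Suc m) zc) / norm p1"
      using arg_cong[OF Vps[of "Suc m"], of norm] by (simp add: norm_divide)
    also have "\<dots> \<le> z ^ m * CB / norm p1" using psb[of m] p1nz by (intro divide_right_mono) auto
    finally have v: "\<bar>V (Suc m) x0\<bar> \<le> z ^ m * CB / norm p1" .
    have "(V (Suc m) x0)^2 = \<bar>V (Suc m) x0\<bar>^2" by simp
    also have "\<dots> \<le> (z ^ m * CB / norm p1)^2" using v by (intro power_mono) auto
    finally have v2: "(V (Suc m) x0)^2 \<le> (z ^ m * CB / norm p1)^2" .
    have "norm (fK x0 m) = (V (Suc m) x0)^2 / h m" unfolding fK_def using h_pos[of m] by simp
    also have "\<dots> \<le> (z ^ m * CB / norm p1)^2 / hlo"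
      using v2 h_bounds(1)[of m] h_bounds(3) by (intro frac_le) auto
    also have "\<dots> = (CB / norm p1)^2 / hlo * (z^2) ^ m"
    proof -
      have "(z^m)^2 = (z^2)^m" by (metis power_mult mult.commute)
      then show ?thesis by (simp add: power_mult_distrib power_divide)
    qed
    finally show ?thesis .
  qed
  have S: "summable (fK x0)"
  proof (rule summable_comparison_test'[where N=0])
    show "summable (\<lambda>m. (CB / norm p1)^2 / hlo * (z^2) ^ m)"
    proof (intro summable_mult summable_geometric)
      have "z^2 < 1" using z by (simp add: power_less_one_iff)
      then show "norm (z^2) < 1" using z by simp
    qed
  qed (use fKb in auto)
  then show "summable (fK (z + 1 / z))" unfolding x0_def .
  define K where "K = suminf (fK x0)"
  have K1: "K \<ge> 1"
  proof -
    have "KN x0 1 \<le> K" unfolding K_def KN_fK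
      by (rule sum_le_suminf[OF S]) (auto simp: fK_nonneg)
    then show ?thesis using KN_ge1[of 1 x0] by simp
  qed
  have wtK: "wt x0 = 1 / K" unfolding wt_def K_def using S by simp
  then show "wt (z + 1 / z) > 0" using K1 unfolding x0_def by simp
  have fKc: "complex_of_real (fK x0 m) = complex_of_real (g 0) / p1^2 * tm zc m zc" for m
  proof -
    have "complex_of_real (fK x0 m) = (complex_of_real (V (Suc m) x0))^2 / complex_of_real (h m)"
      unfolding fK_def by simp
    also have "\<dots> = (ps (Suc m) zc / p1)^2 * complex_of_real (g 0) / complex_of_real (g m)"
      unfolding Vps h_def using g_pos[of 0] g_pos[of m] by (simp add: field_simps)
    also have "\<dots> = complex_of_real (g 0) / p1^2 * tm zc m zc"
      unfolding tm_def using p1nz gc_nz[of m] by (simp add: field_simps power2_eq_square)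
    finally show ?thesis .
  qed
  have Ksums: "(\<lambda>m. complex_of_real (fK x0 m)) sums complex_of_real K"
    unfolding K_def sums_of_real_iff by (rule summable_sums[OF S])
  have S2sums: "(\<lambda>m. tm zc m zc) sums S2 zc zc"
    by (rule S2_sums[of zc z zc z]) (use nzc z in auto)
  have KS: "complex_of_real K = complex_of_real (g 0) / p1^2 * S2 zc zc"
    using sums_unique2[OF Ksums[unfolded fKc] sums_mult[OF S2sums]] .
  define tn where "tn n = z + (1 - z) / (2 * (real n + 2))" for n
  define r where "r = (1 + z) / 2"
  have tn_gt: "tn n > z" for n unfolding tn_def using z by simp
  have tn_le: "tn n \<le> r" for n
  proof -
    have "(1 - z) / (2 * (real n + 2)) \<le> (1 - z) / 2"
      using z by (intro divide_left_mono) auto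
    then show ?thesis unfolding tn_def r_def by (simp add: field_simps)
  qed
  have r1: "r < 1" "r > 0" unfolding r_def using z by auto
  have tn_lt1: "tn n < 1" for n using tn_le[of n] r1 by simp
  have tn_pos: "tn n > 0" for n using tn_gt[of n] z by simp
  have tn_lim: "tn \<longlonglongrightarrow> z"
  proof -
    have "(\<lambda>n. (1 - z) / (2 * (real n + 2))) \<longlonglongrightarrow> 0"
      by real_asymp
    then show ?thesis unfolding tn_def using tendsto_add[OF tendsto_const[of z]] by fastforce
  qed
  define wn where "wn n = complex_of_real (tn n)" for n
  have wn_lim: "wn \<longlonglongrightarrow> zc" unfolding wn_def zc_def by (intro tendsto_of_real tn_lim)
  have wn_ne: "wn n \<noteq> zc" for n using tn_gt[of n] unfolding wn_def zc_def by auto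
  have wn_in: "wn n \<in> cball 0 r" for n using tn_le[of n] tn_pos[of n] unfolding wn_def by auto
  have lim1: "(\<lambda>n. S2 zc (wn n)) \<longlonglongrightarrow> S2 zc zc"
  proof -
    have c: "continuous_on (cball 0 r) (S2 zc)"
      by (rule S2_cont[of zc z]) (use nzc z r1 in auto)
    have "zc \<in> cball 0 r" using nzc z unfolding r_def by auto
    then show ?thesis using continuous_on_tendsto_compose[OF c wn_lim] wn_in by auto
  qed
  have eqn: "S2 zc (wn n) = p1 * ((ps 0 (wn n) - ps 0 zc) / (wn n - zc)) / (1 - 1 / (wn n * zc))" for n
  proof -
    have gl: "(complex_of_real (z + 1 / z) - complex_of_real (tn n + 1 / tn n)) * S2 zc (wn n)
        = - p1 * ps 0 (wn n)"
      using green_lim[OF z tn_pos tn_lt1 p0] unfolding wn_def zc_def p1_def by simp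
    have wn0: "wn n \<noteq> 0" using tn_pos[of n] unfolding wn_def by simp
    have prod1: "wn n * zc \<noteq> 1"
    proof
      assume "wn n * zc = 1"
      then have "tn n * z = 1" unfolding wn_def zc_def by (metis of_real_eq_1_iff of_real_mult)
      moreover have "tn n * z < 1 * 1" using tn_lt1[of n] tn_pos[of n] z by (intro mult_strict_mono) auto
      ultimately show False by simp
    qed
    have fac: "complex_of_real (z + 1 / z) - complex_of_real (tn n + 1 / tn n) = - ((wn n - zc) * (1 - 1 / (wn n * zc)))"
      unfolding wn_def zc_def using z tn_pos[of n] by (simp add: field_simps)
    have nz2: "1 - 1 / (wn n * zc) \<noteq> 0" using prod1 wn0 zc0 by (simp add: field_simps)
    have nz1: "wn n - zc \<noteq> 0" using wn_ne[of n] by simp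
    define F where "F = (wn n - zc) * (1 - 1 / (wn n * zc))"
    have F0: "F \<noteq> 0" unfolding F_def using nz1 nz2 by simp
    have "F * S2 zc (wn n) = p1 * ps 0 (wn n)" using gl unfolding fac F_def[symmetric] by simp
    then have "S2 zc (wn n) = p1 * ps 0 (wn n) / F" using F0 by (simp add: eq_divide_eq mult.commute)
    also have "\<dots> = p1 * ((ps 0 (wn n) - ps 0 zc) / (wn n - zc)) / (1 - 1 / (wn n * zc))"
      unfolding F_def p0' by simp
    finally show ?thesis .
  qed
  have dq: "(\<lambda>n. (ps 0 (wn n) - ps 0 zc) / (wn n - zc)) \<longlonglongrightarrow> D"
  proof -
    have "((\<lambda>y. (ps 0 y - ps 0 zc) / (y - zc)) \<longlongrightarrow> D) (at zc)"
      using ps0_deriv[OF zc0] unfolding D_def has_field_derivative_iff .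
    then have "((\<lambda>y. (ps 0 y - ps 0 zc) / (y - zc)) \<circ> wn) \<longlonglongrightarrow> D"
      using wn_lim wn_ne unfolding tendsto_at_iff_sequentially by auto
    then show ?thesis by (simp add: o_def)
  qed
  have dnz: "1 - 1 / (zc * zc) \<noteq> 0"
  proof
    assume "1 - 1 / (zc * zc) = 0"
    then have "zc * zc = 1" using zc0 by (simp add: field_simps)
    then have "z * z = 1" unfolding zc_def by (metis of_real_eq_1_iff of_real_mult)
    moreover have "z * z < 1 * 1" using z by (intro mult_strict_mono) auto
    ultimately show False by simp
  qed
  have lim2: "(\<lambda>n. S2 zc (wn n)) \<longlonglongrightarrow> p1 * D / (1 - 1 / (zc * zc))"
    unfolding eqn using dnz by (intro tendsto_intros dq wn_lim) (use zc0 in auto)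
  have S2z: "S2 zc zc = p1 * D / (1 - 1 / (zc * zc))"
    using LIMSEQ_unique[OF lim1 lim2] .
  have Kc: "complex_of_real K = complex_of_real (g 0) * D / (p1 * (1 - 1 / (zc * zc)))"
    unfolding KS S2z using p1nz by (simp add: field_simps power2_eq_square)
  have "complex_of_real (wt x0) = 1 / complex_of_real K" unfolding wtK by simp
  also have "\<dots> = p1 * (1 - 1 / (zc * zc)) / (complex_of_real (g 0) * D)"
    unfolding Kc by simp
  also have "\<dots> = complex_of_real (1 / g 0) * complex_of_real ((z^2 - 1) / z^2) * p1 / D"
    unfolding zc_def using z g_pos[of 0] by (simp add: field_simps power2_eq_square)
  finally show "complex_of_real (wt (z + 1 / z)) = complex_of_real (1 / g 0) * complex_of_real ((z^2 - 1) / z^2)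
        * ps 1 (complex_of_real z) / deriv (ps 0) (complex_of_real z)"
    unfolding x0_def p1_def D_def zc_def .
qed

end

context qmeas begin

definition Zs :: "real set" where
  "Zs = {z::real. 0 < z \<and> z < 1 \<and> psi_plus q \<alpha> \<beta> (-1) (complex_of_real z) = 0}"

lemma Zs_ps: "Zs = {z::real. 0 < z \<and> z < 1 \<and> ps 0 (complex_of_real z) = 0}"
  unfolding Zs_def ps_psi0 ..

lemma wt_support:
  assumes "wt x \<noteq> 0"
  shows "\<exists>z\<in>Zs. x = z + 1 / z \<or> x = - (z + 1 / z)"
proof (cases "\<bar>x\<bar> \<le> 2")
  case True then show ?thesis using small_x_wt0 assms by simp
next
  case False
  show ?thesis
  proof (cases "x > 2")
    case True
    have "zx x \<in> Zs" unfolding Zs_ps using zx_props[OF True] wt_nz_large[OF True assms] by simp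
    then show ?thesis using zx_props(3)[OF True] by metis
  next
    case F2: False
    then have xn: "- x > 2" using False by simp
    have w: "wt (- x) \<noteq> 0" using assms wt_neg by simp
    have "zx (- x) \<in> Zs" unfolding Zs_ps using zx_props[OF xn] wt_nz_large[OF xn w] by simp
    moreover have "x = - (zx (- x) + 1 / zx (- x))" using zx_props(3)[OF xn] by simp
    ultimately show ?thesis by blast
  qed
qed

lemma Zs_finite: "finite Zs"
proof (rule ccontr)
  assume inf: "infinite Zs"
  define K where "K = complex_of_real ` {0..1}"
  have cK: "compact K" unfolding K_def
    by (intro compact_continuous_image continuous_intros) auto
  have KS: "K \<subseteq> ball 0 2" unfolding K_def by auto
  have sub: "complex_of_real ` Zs \<subseteq> {w \<in> K. Phi 0 w = 0}"
  proof
    fix w assume "w \<in> complex_of_real ` Zs"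
    then obtain z where z: "z \<in> Zs" "w = complex_of_real z" by blast
    then have z01: "0 < z" "z < 1" "ps 0 (complex_of_real z) = 0" unfolding Zs_ps by auto
    then have "Phi 0 w = 0" using z(2) unfolding ps_def by simp
    moreover have "w \<in> K" using z01 z(2) unfolding K_def by auto
    ultimately show "w \<in> {w \<in> K. Phi 0 w = 0}" by simp
  qed
  have "infinite (complex_of_real ` Zs)"
    using inf finite_imageD inj_on_def of_real_eq_iff by (metis (mono_tags, lifting))
  then have "infinite {w \<in> K. Phi 0 w = 0}" using sub finite_subset by blast
  then have const: "Phi 0 constant_on ball 0 2"
    using holomorphic_compact_finite_zeros[OF Phi_holo open_ball connected_ball cK KS] by blast
  obtain z0 where z0: "z0 \<in> Zs" using inf by (metis finite.emptyI ex_in_conv)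
  then have z0p: "0 < z0" "z0 < 1" "Phi 0 (complex_of_real z0) = 0" unfolding Zs_ps ps_def by auto
  have all0: "Phi 0 (complex_of_real z) = 0" if "0 < z" "z < 1" for z
  proof -
    obtain c where c: "\<And>w. w \<in> ball 0 2 \<Longrightarrow> Phi 0 w = c" using const unfolding constant_on_def by blast
    have "c = 0" using c[of "complex_of_real z0"] z0p by simp
    then show ?thesis using c[of "complex_of_real z"] that by simp
  qed
  have "(\<lambda>z. z + 1 / z) ` {0<..<1} \<subseteq> {x. measure M {x} \<noteq> 0}"
  proof
    fix x assume "x \<in> (\<lambda>z. z + 1 / z) ` {0<..<(1::real)}"
    then obtain z where z: "0 < z" "z < 1" "x = z + 1 / z" by auto
    have "ps 0 (complex_of_real z) = 0" using all0[OF z(1,2)] z unfolding ps_def by simp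
    then have "wt (z + 1 / z) > 0" using zero_case(2)[OF z(1,2)] by simp
    then show "x \<in> {x. measure M {x} \<noteq> 0}" using z atom_wt by simp
  qed
  then have "countable ((\<lambda>z. z + 1 / z) ` {0<..<(1::real)})"
    using P.countable_support countable_subset by blast
  moreover have "inj_on (\<lambda>z. z + 1 / z) {0<..<(1::real)}"
    unfolding inj_on_def using zplus_inj by auto
  ultimately have "countable {0<..<(1::real)}" by (rule countable_image_inj_on)
  then show False using uncountable_open_interval[of 0 1] by simp
qed


lemma discrete_sum:
  "discrete_part M A = (\<Sum>z\<in>Zs. wt (z + 1 / z) * (indicator A (z + 1 / z) + indicator A (- (z + 1 / z))))"
proof -
  define Sp where "Sp = (\<lambda>z. z + 1 / z) ` Zs"
  define Sm where "Sm = (\<lambda>z. - (z + 1 / z)) ` Zs"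
  have fin: "finite (Sp \<union> Sm)" unfolding Sp_def Sm_def using Zs_finite by simp
  have Zpos: "z \<in> Zs \<Longrightarrow> z + 1 / z > 0" for z unfolding Zs_ps by (auto intro: add_pos_pos)
  have "discrete_part M A = infsum wt A"
    unfolding discrete_part_def atom_wt ..
  also have "\<dots> = infsum wt (A \<inter> (Sp \<union> Sm))"
  proof (rule infsum_cong_neutral)
    fix x assume x: "x \<in> A - A \<inter> (Sp \<union> Sm)"
    show "wt x = 0"
    proof (rule ccontr)
      assume "wt x \<noteq> 0"
      then obtain z where "z \<in> Zs" "x = z + 1 / z \<or> x = - (z + 1 / z)" using wt_support by blast
      then have "x \<in> Sp \<union> Sm" unfolding Sp_def Sm_def by auto
      then show False using x by simp
    qed
  qed auto
  also have "\<dots> = sum wt (A \<inter> (Sp \<union> Sm))" using fin by simp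
  also have "\<dots> = (\<Sum>x\<in>Sp \<union> Sm. wt x * indicator A x)"
  proof -
    have e: "A \<inter> (Sp \<union> Sm) = (Sp \<union> Sm) \<inter> A" by blast
    have "sum wt ((Sp \<union> Sm) \<inter> A) = (\<Sum>x\<in>Sp \<union> Sm. if x \<in> A then wt x else 0)"
      by (rule sum.inter_restrict[OF fin])
    also have "\<dots> = (\<Sum>x\<in>Sp \<union> Sm. wt x * indicator A x)"
      by (rule sum.cong[OF refl]) (simp add: indicator_def)
    finally show ?thesis unfolding e .
  qed
  also have "\<dots> = (\<Sum>x\<in>Sp. wt x * indicator A x) + (\<Sum>x\<in>Sm. wt x * indicator A x)"
  proof (rule sum.union_disjoint)
    show "finite Sp" "finite Sm" using fin by auto
    show "Sp \<inter> Sm = {}"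
    proof (rule equals0I)
      fix x assume "x \<in> Sp \<inter> Sm"
      then obtain z1 z2 where zz: "z1 \<in> Zs" "x = z1 + 1 / z1" "z2 \<in> Zs" "x = - (z2 + 1 / z2)"
        unfolding Sp_def Sm_def by blast
      then show False using Zpos[of z1] Zpos[of z2] by linarith
    qed
  qed
  also have "(\<Sum>x\<in>Sp. wt x * indicator A x) = (\<Sum>z\<in>Zs. wt (z + 1 / z) * indicator A (z + 1 / z))"
    unfolding Sp_def
  proof (rule sum.reindex_cong[OF _ refl refl])
    show "inj_on (\<lambda>z. z + 1 / z) Zs" unfolding inj_on_def Zs_ps using zplus_inj by auto
  qed
  also have "(\<Sum>x\<in>Sm. wt x * indicator A x) = (\<Sum>z\<in>Zs. wt (- (z + 1 / z)) * indicator A (- (z + 1 / z)))"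
    unfolding Sm_def
  proof (rule sum.reindex_cong[OF _ refl refl])
    show "inj_on (\<lambda>z. - (z + 1 / z)) Zs" unfolding inj_on_def Zs_ps using zplus_inj by auto
  qed
  also have "(\<Sum>z\<in>Zs. wt (z + 1 / z) * indicator A (z + 1 / z)) + (\<Sum>z\<in>Zs. wt (- (z + 1 / z)) * indicator A (- (z + 1 / z)))
      = (\<Sum>z\<in>Zs. wt (z + 1 / z) * (indicator A (z + 1 / z) + indicator A (- (z + 1 / z))))"
    by (simp only: wt_neg sum.distrib[symmetric] distrib_left)
  finally show ?thesis .
qed

lemma final_formula:
  "complex_of_real (discrete_part M A)
         = complex_of_real ((1 - \<beta>) / (1 - \<alpha>)) *
           (\<Sum>z \<in> Zs.
              complex_of_real ((z^2 - 1) / z^2)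
              * psi_plus q \<alpha> \<beta> 0 (complex_of_real z)
              / deriv (psi_plus q \<alpha> \<beta> (-1)) (complex_of_real z)
              * complex_of_real (indicator A (z + 1/z) + indicator A (- (z + 1/z))))"
proof -
  have g0: "1 / g 0 = (1 - \<beta>) / (1 - \<alpha>)" unfolding gam_def by simp
  have "complex_of_real (discrete_part M A)
      = (\<Sum>z\<in>Zs. complex_of_real (wt (z + 1 / z)) * complex_of_real (indicator A (z + 1 / z) + indicator A (- (z + 1 / z))))"
    unfolding discrete_sum by simp
  also have "\<dots> = (\<Sum>z\<in>Zs. complex_of_real ((1 - \<beta>) / (1 - \<alpha>)) * (complex_of_real ((z^2 - 1) / z^2)
              * ps 1 (complex_of_real z) / deriv (ps 0) (complex_of_real z)
              * complex_of_real (indicator A (z + 1/z) + indicator A (- (z + 1/z)))))"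
  proof (rule sum.cong[OF refl])
    fix z assume "z \<in> Zs"
    then have z: "0 < z" "z < 1" "ps 0 (complex_of_real z) = 0" unfolding Zs_ps by auto
    show "complex_of_real (wt (z + 1 / z)) * complex_of_real (indicator A (z + 1 / z) + indicator A (- (z + 1 / z)))
        = complex_of_real ((1 - \<beta>) / (1 - \<alpha>)) * (complex_of_real ((z^2 - 1) / z^2)
              * ps 1 (complex_of_real z) / deriv (ps 0) (complex_of_real z)
              * complex_of_real (indicator A (z + 1/z) + indicator A (- (z + 1/z))))"
      unfolding zero_case(3)[OF z] g0 by (simp add: divide_inverse mult_ac)
  qed
  also have "\<dots> = complex_of_real ((1 - \<beta>) / (1 - \<alpha>)) * (\<Sum>z\<in>Zs. complex_of_real ((z^2 - 1) / z^2)
              * ps 1 (complex_of_real z) / deriv (ps 0) (complex_of_real z)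
              * complex_of_real (indicator A (z + 1/z) + indicator A (- (z + 1/z))))"
    by (rule sum_distrib_left[symmetric])
  finally show ?thesis unfolding ps_psi0 ps_psi1 .
qed

end

theorem proposition2p12:
  fixes q \<alpha> \<beta> :: real and M :: "real measure"
  assumes "0 < q" "q < 1" "-1 < \<alpha>" "\<alpha> < 1" "\<beta> < 1"
    and "prob_space M" "sets M = sets borel"
    and "\<And>m n. integrable M (\<lambda>x. opoly q \<alpha> \<beta> m x * opoly q \<alpha> \<beta> n x)"
    and "\<And>m n. (\<integral>x. opoly q \<alpha> \<beta> m x * opoly q \<alpha> \<beta> n x \<partial>M)
              = (if m = n then (\<Prod>j<n. gam q \<alpha> \<beta> j * gam q \<alpha> \<beta> (Suc j)) else 0)"
  shows "finite {z::real. 0 < z \<and> z < 1 \<and> psi_plus q \<alpha> \<beta> (-1) (complex_of_real z) = 0}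
    \<and> (\<forall>A \<in> sets borel.
         complex_of_real (discrete_part M A)
         = complex_of_real ((1 - \<beta>) / (1 - \<alpha>)) *
           (\<Sum>z \<in> {z::real. 0 < z \<and> z < 1 \<and> psi_plus q \<alpha> \<beta> (-1) (complex_of_real z) = 0}.
              complex_of_real ((z^2 - 1) / z^2)
              * psi_plus q \<alpha> \<beta> 0 (complex_of_real z)
              / deriv (psi_plus q \<alpha> \<beta> (-1)) (complex_of_real z)
              * complex_of_real (indicator A (z + 1/z) + indicator A (- (z + 1/z)))))"
proof -
  have Q: "qset q \<alpha> \<beta>" unfolding qset_def using assms(1-5) by blast
  have QA: "qmeas_axioms q \<alpha> \<beta> M" unfolding qmeas_axioms_def
    by (intro conjI allI) (rule assms)+
  interpret qmeas q \<alpha> \<beta> M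
    by (rule qmeas.intro[OF Q QA])
  show ?thesis unfolding Zs_def[symmetric] by (intro conjI ballI Zs_finite final_formula)
qed

end
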